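(* Let $n\ge 6$ be even. If $n\equiv 0\pmod 4$, there are exactly $n+2$ circulant Latin squares of order $n$ with inner distance $\frac n2-1$ and symbol $1$ in cell $(1,1)$, and exactly $n+2$ such back-circulant Latin squares. If $n\equiv 2\pmod 4$, there are exactly $n$ of each type.
   Context: Symbols are $[1,n]$; $\mathrm{dist}(a,b)$ is the minimum of the residues of $a-b$ and $b-a$ modulo $n$ (in $[0,n-1]$). A Latin square of order $n$ is an $n\times n$ matrix over $[1,n]$ with each symbol exactly once in every row and column; its inner distance is the minimum of $\mathrm{dist}$ over symbols in horizontally or vertically adjacent cells. A circulant Latin square is one in which each row $i+1$ is row $i$ cyclically shifted one position to the right; a back-circulant Latin square is one in which each row $i+1$ is row $i$ cyclically shifted one position to the left. *)

theory Defs
  imports Main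
begin

text \<open>An n x n matrix is a function nat => nat => nat; rows/columns are indexed
  0..n-1 (paper's row r is index r-1). To make the set of matrices finite
  we require entries outside the n x n block to be 0.\<close>

definition is_matrix :: "nat \<Rightarrow> (nat \<Rightarrow> nat \<Rightarrow> nat) \<Rightarrow> bool" where
  "is_matrix n L \<longleftrightarrow> (\<forall>i j. (n \<le> i \<or> n \<le> j) \<longrightarrow> L i j = 0)"

definition latin_square :: "nat \<Rightarrow> (nat \<Rightarrow> nat \<Rightarrow> nat) \<Rightarrow> bool" where
  "latin_square n L \<longleftrightarrow> is_matrix n L \<and>
     (\<forall>i<n. bij_betw (\<lambda>j. L i j) {0..<n} {1..n}) \<and>
     (\<forall>j<n. bij_betw (\<lambda>i. L i j) {0..<n} {1..n})"

definition sym_dist :: "nat \<Rightarrow> nat \<Rightarrow> nat \<Rightarrow> nat" where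
  "sym_dist n a b = nat (min ((int a - int b) mod int n) ((int b - int a) mod int n))"

definition inner_distance :: "nat \<Rightarrow> (nat \<Rightarrow> nat \<Rightarrow> nat) \<Rightarrow> nat" where
  "inner_distance n L = Min
     ({sym_dist n (L i j) (L i (j+1)) | i j. i < n \<and> j + 1 < n} \<union>
      {sym_dist n (L i j) (L (i+1) j) | i j. i + 1 < n \<and> j < n})"

definition circulant :: "nat \<Rightarrow> (nat \<Rightarrow> nat \<Rightarrow> nat) \<Rightarrow> bool" where
  "circulant n L \<longleftrightarrow> (\<forall>i j. i + 1 < n \<and> j < n \<longrightarrow> L (i+1) ((j+1) mod n) = L i j)"

definition back_circulant :: "nat \<Rightarrow> (nat \<Rightarrow> nat \<Rightarrow> nat) \<Rightarrow> bool" where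
  "back_circulant n L \<longleftrightarrow> (\<forall>i j. i + 1 < n \<and> j < n \<longrightarrow> L (i+1) j = L i ((j+1) mod n))"

end

theory Submission
  imports Defs
begin


lemma modI: "0 \<le> y \<Longrightarrow> y < m \<Longrightarrow> x = y + q * m \<Longrightarrow> x mod m = (y::int)"
  by simp

lemma modI3: assumes "0 \<le> y" "y < m" "x = y \<or> x = y + m \<or> x = y - m" shows "x mod m = (y::int)"
proof -
  from assms(3) consider "x = y + 0 * m" | "x = y + 1 * m" | "x = y + (-1) * m" by auto
  then show ?thesis by cases (use assms(1,2) modI in blast)+
qed

lemma modcases: assumes "0 \<le> x" "x < 2*m" "(m::int) > 0" shows "x mod m = x \<or> x mod m = x - m"
proof (cases "x < m")
  case True
  then show ?thesis using assms by simp
next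
  case False
  then have "x mod m = x - m" using assms by (intro modI[where q=1]) auto
  then show ?thesis by simp
qed

definition Pat :: "nat \<Rightarrow> nat \<Rightarrow> nat \<Rightarrow> int" where
  "Pat n h q = (if q = 0 \<or> q = h then 0 else if q < h then 1 else -1)"

lemma PatShift: assumes "n = 2*h" "h \<ge> 1" "j < n" shows "Pat n h ((j+h) mod n) = - Pat n h j"
proof -
  consider "j = 0" | "1 \<le> j \<and> j < h" | "j = h" | "h < j \<and> j < n" using assms by linarith
  then show ?thesis
  proof cases
    case 1 then show ?thesis using assms by (simp add: Pat_def)
  next
    case 2 then have "(j+h) mod n = j + h" using assms by simp
    then show ?thesis using 2 assms by (simp add: Pat_def)
  next
    case 3 then have "(j+h) mod n = 0" using assms by (simp add: mult_2)
    then show ?thesis using 3 assms by (simp add: Pat_def)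
  next
    case 4 then have "(j+h) mod n = j - h" using assms by (simp add: mod_if)
    then show ?thesis using 4 assms by (simp add: Pat_def)
  qed
qed

lemma idxmod: assumes "(n::nat) > 0" shows "(k + (t + (n - k mod n)) mod n) mod n = t mod n"
proof -
  have "(k + (t + (n - k mod n)) mod n) mod n = (k + (t + (n - k mod n))) mod n"
    by (simp add: mod_add_right_eq)
  moreover have "k + (t + (n - k mod n)) = t + (k div n + 1) * n"
  proof -
    have "n * (k div n) + k mod n = k" by (rule mult_div_mod_eq)
    moreover have "k mod n < n" using assms by simp
    moreover have "(k div n + 1) * n = n * (k div n) + n" by (simp add: algebra_simps)
    ultimately show ?thesis by linarith
  qed
  ultimately show ?thesis by (metis mod_mult_self1)
qed

locale cyc =
  fixes n h :: nat and V e :: "nat \<Rightarrow> int"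
  assumes h3: "3 \<le> h" and n2: "n = 2*h"
    and Vlo: "0 \<le> V k" and Vhi: "V k < int n"
    and Vs: "V (Suc k) = (V k + int h + e k) mod int n"
    and er: "e k = -1 \<or> e k = 0 \<or> e k = 1"
    and Vp: "V (k + n) = V k"
    and Vi: "i < n \<Longrightarrow> j < n \<Longrightarrow> V i = V j \<Longrightarrow> i = j"
begin

lemma Vs2: "V (Suc k) = V k + int h + e k \<or> V (Suc k) = V k + int h + e k - int n"
proof -
  have "0 \<le> V k + int h + e k" "V k + int h + e k < 2 * int n" "int n > 0"
    using Vlo[of k] Vhi[of k] er[of k] h3 n2 by auto
  from modcases[OF this] show ?thesis using Vs[of k] by simp
qed

lemma VpM: "V (k + m*n) = V k"
proof (induction m)
  case 0 then show ?case by simp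
next
  case (Suc m)
  have "V (k + Suc m * n) = V ((k + m*n) + n)" by (simp add: algebra_simps)
  also have "\<dots> = V k" using Vp Suc by simp
  finally show ?case .
qed

lemma Vmod: "V k = V (k mod n)"
proof -
  have "k = k mod n + (k div n) * n" by simp
  then have "V k = V (k mod n + (k div n) * n)" by simp
  then show ?thesis using VpM[of "k mod n" "k div n"] by simp
qed

lemma npos: "n > 2" using h3 n2 by simp

lemma Vinj: "V i = V j \<Longrightarrow> i mod n = j mod n"
  using Vi[of "i mod n" "j mod n"] Vmod[of i] Vmod[of j] npos by simp

lemma Vrep: "V (i + c) = V i \<Longrightarrow> 0 < c \<Longrightarrow> c < 2*n \<Longrightarrow> c = n"
proof -
  assume a: "V (i + c) = V i" "0 < c" "c < 2*n"
  have "(i + c) mod n = i mod n" using Vinj[OF a(1)] .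
  then have "n dvd c"
    by (metis add_diff_cancel_left' le_add1 mod_eq_dvd_iff_nat)
  then obtain q where q: "c = n * q" by blast
  have "n * q < n * 2" using a q by (simp add: mult.commute)
  then have "q < 2" by simp
  moreover have "q > 0" using a q by (cases q) auto
  ultimately have "q = 1" by simp
  with q show "c = n" by simp
qed

lemma Vshift: "V a = V b \<Longrightarrow> V (a + c) = V (b + c)"
proof -
  assume "V a = V b"
  then have "a mod n = b mod n" by (rule Vinj)
  then have "(a + c) mod n = (b + c) mod n" by (metis mod_add_left_eq)
  then show ?thesis using Vmod[of "a+c"] Vmod[of "b+c"] by simp
qed

lemma Vunshift: "V (a + c) = V (b + c) \<Longrightarrow> V a = V b"
proof -
  assume "V (a + c) = V (b + c)"
  then have "V (a + c + (c*n - c)) = V (b + c + (c*n - c))" by (rule Vshift)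
  moreover have "a + c + (c*n - c) = a + c*n" "b + c + (c*n - c) = b + c*n" using npos
    by (simp_all add: add.commute)
  ultimately show ?thesis using VpM by simp
qed

lemma ep: "e (k + n) = e k"
proof -
  have "V (Suc k + n) = V (Suc k)" by (rule Vp)
  then have "V (Suc (k + n)) = V (Suc k)" by simp
  moreover note Vs2[of "k+n"] Vs2[of k] Vp[of k] er[of k] er[of "k+n"] npos
  ultimately show ?thesis by auto
qed

lemma epM: "e (k + m*n) = e k"
proof (induction m)
  case 0 then show ?case by simp
next
  case (Suc m)
  have "e (k + Suc m * n) = e ((k + m*n) + n)" by (simp add: algebra_simps)
  also have "\<dots> = e k" using ep Suc by simp
  finally show ?case .
qed

lemma emod: "e k = e (k mod n)"
proof -
  have "k = k mod n + (k div n) * n" by simp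
  then have "e k = e (k mod n + (k div n) * n)" by simp
  then show ?thesis using epM[of "k mod n" "k div n"] by simp
qed

lemma surj: "0 \<le> x \<Longrightarrow> x < int n \<Longrightarrow> \<exists>m<n. V m = x"
proof -
  assume x: "0 \<le> x" "x < int n"
  have "V ` {..<n} \<subseteq> {0..<int n}" using Vlo Vhi by auto
  moreover have "inj_on V {..<n}" using Vi by (auto simp: inj_on_def)
  then have "card (V ` {..<n}) = card {0..<int n}" by (simp add: card_image)
  ultimately have "V ` {..<n} = {0..<int n}" by (simp add: card_subset_eq)
  then show ?thesis using x by (metis image_iff lessThan_iff atLeastLessThan_iff)
qed

lemma Fz: "e k = 0 \<Longrightarrow> e (Suc k) \<noteq> 0"
proof
  assume a: "e k = 0" "e (Suc k) = 0"
  have "V (k + 2) = V k"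
    using Vs2[of k] Vs2[of "Suc k"] a Vlo[of k] Vhi[of k] Vlo[of "k+2"] Vhi[of "k+2"] n2 by auto
  from Vrep[OF this] npos show False by simp
qed

lemma Fpm: "e k \<noteq> 0 \<Longrightarrow> e (Suc k) \<noteq> 0 \<Longrightarrow> e (Suc k) = e k"
proof (rule ccontr)
  assume a: "e k \<noteq> 0" "e (Suc k) \<noteq> 0" "e (Suc k) \<noteq> e k"
  have "V (k + 2) = V k"
    using Vs2[of k] Vs2[of "Suc k"] a er[of k] er[of "Suc k"] Vlo[of k] Vhi[of k] Vlo[of "k+2"] Vhi[of "k+2"] n2 by auto
  from Vrep[OF this] npos show False by simp
qed

lemma stepL: "j' = j + 1 \<Longrightarrow> V j' = V j + int h + e j \<or> V j' = V j + int h + e j - int n"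
  using Vs2[of j] by simp

lemma F3:
  assumes s: "\<sigma> = 1 \<or> \<sigma> = -1" and a: "e (k+2) = \<sigma>" "e (k+3) = 0" "e (k+4) = \<sigma>"
  shows "e k = \<sigma> \<and> e (k+1) = 0"
proof -
  define x where "x = V (k+2)"
  have n6: "int n \<ge> 6" using h3 n2 by simp
  have idx: "(k+3)+1 = k+4" "(k+4)+1 = k+5" "(k+2)+1 = k+3" "(k+1)+1 = k+2" by simp_all
  have bx: "0 \<le> x" "x < int n" using Vlo Vhi x_def by auto
  have v3: "V (k+3) = x + int h + \<sigma> \<or> V (k+3) = x + int h + \<sigma> - int n"
    using stepL[of "k+3" "k+2"] a x_def by (simp add: add.assoc)
  have v4: "V (k+4) = V (k+3) + int h \<or> V (k+4) = V (k+3) + int h - int n"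
    using stepL[of "k+4" "k+3"] a by (simp add: add.assoc)
  have v5: "V (k+5) = V (k+4) + int h + \<sigma> \<or> V (k+5) = V (k+4) + int h + \<sigma> - int n"
    using stepL[of "k+5" "k+4"] a by (simp add: add.assoc)
  have b3: "0 \<le> V (k+3)" "V (k+3) < int n" "0 \<le> V (k+4)" "V (k+4) < int n" "0 \<le> V (k+5)" "V (k+5) < int n"
    using Vlo Vhi by auto
  have h4: "V (k+4) = x + \<sigma> \<or> V (k+4) = x + \<sigma> - int n \<or> V (k+4) = x + \<sigma> + int n"
    using v3 v4 n2 by auto
  define y where "y = (x + int h) mod int n"
  have y: "y = x + int h \<or> y = x + int h - int n" unfolding y_def using modcases[of "x + int h" "int n"] bx n2 by auto
  obtain m where m: "m < n" "V m = y"
    using surj[of y] y bx n2 unfolding y_def by auto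
  define p where "p = m + n - 1"
  have Sp: "Suc p = m + n" using p_def npos by simp
  have Vsp: "V (Suc p) = y" using Sp Vp m by simp
  have vm1: "V (Suc m) = y + int h + e m \<or> V (Suc m) = y + int h + e m - int n" using Vs2[of m] m by simp
  have vp: "y = V p + int h + e p \<or> y = V p + int h + e p - int n" using Vs2[of p] Vsp by simp
  have bm: "0 \<le> V (Suc m)" "V (Suc m) < int n" "0 \<le> V p" "V p < int n" using Vlo Vhi by auto
  have hSm: "V (Suc m) = x + e m \<or> V (Suc m) = x + e m + int n \<or> V (Suc m) = x + e m - int n"
    using vm1 y n2 by auto
  have hp: "V p = x - e p \<or> V p = x - e p + int n \<or> V p = x - e p - int n"
    using vp y n2 by auto
  have ym3: "y \<noteq> V (k+3)" using y v3 s n6 bx b3 by auto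
  have c1: "V (Suc m) \<noteq> V (k+4)"
  proof
    assume "V (Suc m) = V (k+4)"
    then have "V (m + 1) = V ((k+3) + 1)" by (simp only: idx Suc_eq_plus1)
    then have "V m = V (k+3)" by (rule Vunshift)
    with m ym3 show False by simp
  qed
  have c2: "V p \<noteq> V (k+4)"
  proof
    assume "V p = V (k+4)"
    then have "V (p + 1) = V ((k+4) + 1)" by (rule Vshift)
    then have "y = V (k+5)" using Vsp by (simp only: idx Suc_eq_plus1)
    then show False using y v5 h4 s n6 bx b3 by auto
  qed
  have c3: "V (Suc m) \<noteq> V p"
  proof
    assume eq: "V (Suc m) = V p"
    have "V (p + 2) = V (Suc m + n)" using Sp by simp
    also have "\<dots> = V p" using Vp[of "Suc m"] eq by simp
    finally have "2 = n" using Vrep[of p 2] npos by simp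
    then show False using npos by simp
  qed
  have erm: "e m = -1 \<or> e m = 0 \<or> e m = 1" and erp: "e p = -1 \<or> e p = 0 \<or> e p = 1" using er by auto
  have em: "e m \<noteq> \<sigma>"
  proof
    assume "e m = \<sigma>"
    then have "V (Suc m) = V (k+4)" using hSm h4 bx bm b3 by auto
    with c1 show False by simp
  qed
  have ep1: "e p \<noteq> - \<sigma>"
  proof
    assume "e p = - \<sigma>"
    then have "V p = V (k+4)" using hp h4 bx bm b3 by auto
    with c2 show False by simp
  qed
  have z1: "e m = 0 \<Longrightarrow> V (Suc m) = x" using hSm bx bm by auto
  have z2: "e p = 0 \<Longrightarrow> V p = x" using hp bx bm by auto
  have z3: "e m = - \<sigma> \<Longrightarrow> e p = \<sigma> \<Longrightarrow> V (Suc m) = V p" using hSm hp bx bm by auto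
  have AB: "V (Suc m) = x \<or> V p = x"
  proof (rule ccontr)
    assume "\<not> (V (Suc m) = x \<or> V p = x)"
    then have "e m \<noteq> 0" "e p \<noteq> 0" using z1 z2 by auto
    then have "e m = - \<sigma>" "e p = \<sigma>" using erm erp em ep1 s by auto
    with z3 c3 show False by simp
  qed
  show ?thesis
  proof (cases "V p = x")
    case True
    then have "V (p + 1) = V ((k+2) + 1)" using x_def by (intro Vshift) simp
    then have "y = V (k+3)" using Vsp by (simp only: idx Suc_eq_plus1)
    with ym3 show ?thesis by simp
  next
    case False
    with AB have A: "V (Suc m) = x" by simp
    then have "V (m + 1) = V ((k+1) + 1)" using x_def by (simp only: idx Suc_eq_plus1)
    then have "V m = V (k+1)" by (rule Vunshift)
    then have vk1: "V (k+1) = y" using m by simp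
    have "V (p + 2) = V (Suc m + n)" using Sp by simp
    also have "\<dots> = V (k + 2)" using Vp[of "Suc m"] A x_def by simp
    finally have "V p = V k" by (rule Vunshift)
    have s2: "V (k+2) = V (k+1) + int h + e (k+1) \<or> V (k+2) = V (k+1) + int h + e (k+1) - int n"
      by (rule stepL) simp
    have e1: "e (k+1) = 0"
      using s2 vk1 y x_def er[of "k+1"] n2 by arith
    have "e p \<noteq> 0" using z2 False by auto
    then have ep': "e p = \<sigma>" using erp ep1 s by auto
    have s1: "V (k+1) = V k + int h + e k \<or> V (k+1) = V k + int h + e k - int n"
      by (rule stepL) simp
    have "e k = e p"
      using s1 vk1 vp \<open>V p = V k\<close> er[of k] erp n6 bx bm by arith
    with ep' e1 show ?thesis by simp
  qed
qed

lemma NoSZS: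
  assumes s: "\<sigma> = 1 \<or> \<sigma> = -1" and a: "e k = \<sigma>" "e (k+1) = 0" "e (k+2) = \<sigma>"
  shows False
proof -
  define Q where "Q j \<longleftrightarrow> e j = \<sigma> \<and> e (j+1) = 0 \<and> e (j+2) = \<sigma>" for j
  have bk: "Q j" if "Q (j+2)" for j
  proof -
    have i: "j+2+1 = j+3" "j+2+2 = j+4" by simp_all
    have "e (j+2) = \<sigma>" "e (j+3) = 0" "e (j+4) = \<sigma>" using that unfolding Q_def i by auto
    from F3[OF s this] this(1) show ?thesis unfolding Q_def by simp
  qed
  have backM: "Q (j + 2*t) \<Longrightarrow> Q j" for j t
  proof (induction t arbitrary: j)
    case 0 then show ?case by simp
  next
    case (Suc t)
    have "Q ((j + 2) + 2*t)" using Suc.prems by (simp add: algebra_simps)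
    then have "Q (j+2)" by (rule Suc.IH)
    then show ?case by (rule bk)
  qed
  have per: "Q (j + m*n) \<longleftrightarrow> Q j" for j m
  proof -
    have "e (j + m*n + 1) = e (j+1)" "e (j + m*n + 2) = e (j+2)"
      using epM[of "j+1" m] epM[of "j+2" m] by (simp_all add: algebra_simps)
    then show ?thesis unfolding Q_def using epM[of j m] by simp
  qed
  have Qk: "Q k" unfolding Q_def using a by simp
  have allQ: "Q (k + 2*i)" for i
  proof -
    have i1: "i * 1 \<le> i * h" using h3 by (intro mult_le_mono2) simp
    have i2: "(i+1)*n = 2*((i+1)*h)" using n2 by (simp add: algebra_simps)
    have i3: "2*((i+1)*h - i) = 2*((i+1)*h) - 2*i" by (simp add: diff_mult_distrib2)
    have "k + (i+1)*n = (k + 2*i) + 2*((i+1)*h - i)"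
    proof -
      have "i * 1 \<le> (i+1) * h" using h3 by (intro mult_le_mono) auto
      then have H: "i \<le> (i+1)*h" by simp
      show ?thesis using H i2 i3 by linarith
    qed
    moreover have "Q (k + (i+1)*n)" using per[of k "i+1"] Qk by blast
    ultimately show ?thesis using backM by metis
  qed
  have u: "V (k + 2*i) = (V k + \<sigma> * int i) mod int n" for i
  proof (induction i)
    case 0
    then show ?case using Vlo[of k] Vhi[of k] by simp
  next
    case (Suc i)
    have q: "e (k + 2*i) = \<sigma>" "e (k + 2*i + 1) = 0" using allQ[of i] unfolding Q_def by auto
    have s1: "V (k+2*i+1) = V (k+2*i) + int h + e (k+2*i) \<or> V (k+2*i+1) = V (k+2*i) + int h + e (k+2*i) - int n"
      by (rule stepL) simp
    have s2: "V (k+2*i+2) = V (k+2*i+1) + int h + e (k+2*i+1) \<or> V (k+2*i+2) = V (k+2*i+1) + int h + e (k+2*i+1) - int n"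
      by (rule stepL) simp
    have b: "0 \<le> V (k+2*i+2)" "V (k+2*i+2) < int n" using Vlo Vhi by auto
    have "(V (k + 2*i) + \<sigma>) mod int n = V (k+2*i+2)"
      apply (rule modI3[OF b])
      using s1 s2 q n2 by auto
    also have "k + 2*i + 2 = k + 2 * Suc i" by simp
    finally have "V (k + 2 * Suc i) = ((V k + \<sigma> * int i) mod int n + \<sigma>) mod int n"
      using Suc.IH by simp
    also have "\<dots> = (V k + \<sigma> * int i + \<sigma>) mod int n"
      by (rule mod_add_left_eq)
    also have "V k + \<sigma> * int i + \<sigma> = V k + \<sigma> * int (Suc i)"
      by (simp add: algebra_simps)
    finally show ?case .
  qed
  have "V (k + 2*h) = V k" using Vp n2 by simp
  then have eq: "V k = (V k + \<sigma> * int h) mod int n" using u[of h] by simp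
  have b: "0 \<le> V k" "V k < int n" using Vlo Vhi by auto
  show False
  proof (cases "\<sigma> = 1")
    case True
    then have "(V k + int h) mod int n = V k + int h \<or> (V k + int h) mod int n = V k + int h - int n"
      using modcases[of "V k + int h" "int n"] b n2 by auto
    then show False using eq True n2 h3 by auto
  next
    case False
    then have sm: "\<sigma> = -1" using s by simp
    have "V k + int h = (V k - int h) + int n" using n2 by simp
    then have "(V k - int h) mod int n = (V k + int h) mod int n" by (metis mod_add_self2)
    moreover have "(V k + int h) mod int n = V k + int h \<or> (V k + int h) mod int n = V k + int h - int n"
      using modcases[of "V k + int h" "int n"] b n2 by auto
    ultimately show False using eq sm n2 h3 by auto
  qed
qed

lemma constcase:
  assumes nz: "\<And>k. e k \<noteq> 0"
  shows "(\<forall>k. e k = e 0) \<and> even h"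
proof -
  have c: "e k = e 0" for k
  proof (induction k)
    case 0 then show ?case by simp
  next
    case (Suc k) then show ?case using Fpm[of k] nz by simp
  qed
  have s: "e 0 = 1 \<or> e 0 = -1" using er[of 0] nz[of 0] by auto
  have vi: "V i = (V 0 + int i * (int h + e 0)) mod int n" for i
  proof (induction i)
    case 0 then show ?case using Vlo[of 0] Vhi[of 0] by simp
  next
    case (Suc i)
    have "V (Suc i) = ((V 0 + int i * (int h + e 0)) mod int n + int h + e 0) mod int n"
      using Vs[of i] Suc.IH c[of i] by simp
    also have "\<dots> = (V 0 + int i * (int h + e 0) + (int h + e 0)) mod int n"
      by (metis add.assoc mod_add_left_eq)
    also have "V 0 + int i * (int h + e 0) + (int h + e 0) = V 0 + int (Suc i) * (int h + e 0)"
      by (simp add: algebra_simps)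
    finally show ?case .
  qed
  have "even h"
  proof (rule ccontr)
    assume "odd h"
    then obtain t where t: "int h + e 0 = 2 * t" using s
      by (metis add.commute even_add even_of_nat odd_one dvd_def odd_add even_minus)
    have "V h = (V 0 + int n * t) mod int n" using vi[of h] t n2 by (simp add: algebra_simps)
    also have "\<dots> = V 0" using Vlo[of 0] Vhi[of 0] by simp
    finally have "V (0 + h) = V 0" by simp
    then have "h = n" using Vrep[of 0 h] h3 n2 by simp
    then show False using n2 h3 by simp
  qed
  with c show ?thesis by simp
qed

lemma zerocase:
  assumes z: "e k0 = 0"
  shows "\<exists>s<n. \<forall>t. e t = Pat n h ((t + s) mod n)"
proof -
  define k where "k = k0 + n"
  have kn: "k \<ge> n" unfolding k_def by simp
  have ek: "e k = 0" using z ep k_def by simp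
  define \<sigma> where "\<sigma> = e (k - 1)"
  have km1: "Suc (k - 1) = k" using kn npos by simp
  have "\<sigma> \<noteq> 0" using Fz[of "k-1"] km1 ek \<sigma>_def by auto
  then have s: "\<sigma> = 1 \<or> \<sigma> = -1" using er[of "k-1"] \<sigma>_def by auto
  have ek1: "e (k+1) \<noteq> 0" using Fz[of k] ek by simp
  have "e (k+1) \<noteq> \<sigma>"
  proof
    assume "e (k+1) = \<sigma>"
    moreover have "k - 1 + 1 = k" "k - 1 + 2 = k + 1" using km1 by simp_all
    ultimately show False using NoSZS[OF s, of "k-1"] ek \<sigma>_def by simp
  qed
  then have ek1s: "e (k+1) = - \<sigma>" using ek1 s er[of "k+1"] by auto
  define a where "a = (LEAST a. e (k - Suc a) = 0)"
  have exA: "e (k - Suc (n-1)) = 0" using z npos k_def by simp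
  have a1: "e (k - Suc a) = 0" unfolding a_def using exA by (rule LeastI)
  have a2: "a \<le> n - 1" unfolding a_def using exA by (rule Least_le)
  have a3: "e (k - Suc i) \<noteq> 0" if "i < a" for i using that not_less_Least unfolding a_def by blast
  have upr: "e (k - Suc i) = \<sigma>" if "i < a" for i
    using that
  proof (induction i)
    case 0 then show ?case using \<sigma>_def by simp
  next
    case (Suc i)
    have "Suc (k - Suc (Suc i)) = k - Suc i" using Suc.prems a2 kn npos by simp
    then have "e (k - Suc i) = e (k - Suc (Suc i))"
      using Fpm[of "k - Suc (Suc i)"] a3[of i] a3[of "Suc i"] Suc.prems by simp
    then show ?case using Suc by simp
  qed
  define b where "b = (LEAST b. e (k + Suc b) = 0)"
  have exB: "e (k + Suc (n-1)) = 0" using ek ep npos by simp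
  have b1: "e (k + Suc b) = 0" unfolding b_def using exB by (rule LeastI)
  have b2: "b \<le> n - 1" unfolding b_def using exB by (rule Least_le)
  have b3: "e (k + Suc i) \<noteq> 0" if "i < b" for i using that not_less_Least unfolding b_def by blast
  have dnr: "e (k + Suc i) = - \<sigma>" if "i < b" for i
    using that
  proof (induction i)
    case 0 then show ?case using ek1s by simp
  next
    case (Suc i)
    have "e (Suc (k + Suc i)) = e (k + Suc i)"
      using Fpm[of "k + Suc i"] b3[of i] b3[of "Suc i"] Suc.prems by simp
    then show ?case using Suc by simp
  qed
  have bV: "0 \<le> V j" "V j < int n" for j using Vlo Vhi by auto
  have G: "i \<le> a \<Longrightarrow> i \<le> b \<Longrightarrow> V (k+1+i) = V (k-i) + int h \<or> V (k+1+i) = V (k-i) + int h - int n" for i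
  proof (induction i)
    case 0 then show ?case using stepL[of "k+1" k] ek by simp
  next
    case (Suc i)
    have u: "e (k - Suc i) = \<sigma>" using upr Suc.prems by simp
    have d: "e (k + 1 + i) = - \<sigma>" using dnr[of i] Suc.prems by simp
    have s1: "V (k+1+Suc i) = V (k+1+i) + int h + e (k+1+i) \<or> V (k+1+Suc i) = V (k+1+i) + int h + e (k+1+i) - int n"
      by (rule stepL) simp
    have s2: "V (k-i) = V (k - Suc i) + int h + e (k - Suc i) \<or> V (k-i) = V (k - Suc i) + int h + e (k - Suc i) - int n"
      by (rule stepL) (use Suc.prems a2 kn in simp)
    have IH: "V (k+1+i) = V (k-i) + int h \<or> V (k+1+i) = V (k-i) + int h - int n" using Suc by simp
    show ?case using s1 s2 IH u d bV[of "k+1+Suc i"] bV[of "k - Suc i"] bV[of "k-i"] bV[of "k+1+i"] n2 by auto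
  qed
  have ab: "a \<le> b"
  proof (rule ccontr)
    assume nab: "\<not> a \<le> b"
    have g: "V (k+1+b) = V (k-b) + int h \<or> V (k+1+b) = V (k-b) + int h - int n" using G[of b] nab by simp
    have s1: "V (k+2+b) = V (k+1+b) + int h + e (k+1+b) \<or> V (k+2+b) = V (k+1+b) + int h + e (k+1+b) - int n"
      by (rule stepL) simp
    have "V (k+2+b) = V (k - b)" using g s1 b1 bV[of "k+2+b"] bV[of "k+1+b"] bV[of "k-b"] n2 by auto
    moreover have "k+2+b = (k - b) + (2*b+2)" using b2 kn npos by simp
    ultimately have "V ((k - b) + (2*b+2)) = V (k - b)" by metis
    then have "2*b+2 = n" using Vrep nab a2 by simp
    then have bh: "b = h - 1" using n2 by simp
    then have "e (k + h) = 0" using b1 h3 by simp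
    moreover have "e (k - h) = \<sigma>" using upr[of "h-1"] nab bh h3 by simp
    moreover have "k + h = (k - h) + n" using kn n2 by simp
    ultimately show False using ep \<open>\<sigma> \<noteq> 0\<close> by metis
  qed
  have ah: "a = h - 1"
  proof -
    note True = ab
    have "a \<noteq> n - 1"
    proof
      assume an: "a = n - 1"
      have "k + 1 = (k + 1 - n) + n" using kn by simp
      then have "e (k+1) = e (k + 1 - n)" using ep by metis
      also have "k + 1 - n = k - Suc (n - 2)" using kn npos by simp
      also have "e \<dots> = \<sigma>" using upr[of "n-2"] an npos by simp
      finally show False using ek1s \<open>\<sigma> \<noteq> 0\<close> by simp
    qed
    then have al: "a < n - 1" using a2 by simp
    have g: "V (k+1+a) = V (k-a) + int h \<or> V (k+1+a) = V (k-a) + int h - int n" using G[of a] True by simp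
    have s2: "V (k-a) = V (k - Suc a) + int h + e (k - Suc a) \<or> V (k-a) = V (k - Suc a) + int h + e (k - Suc a) - int n"
      by (rule stepL) (use a2 kn npos in simp)
    have "V (k+1+a) = V (k - Suc a)" using g s2 a1 bV[of "k+1+a"] bV[of "k - Suc a"] bV[of "k-a"] n2 by auto
    moreover have "k+1+a = (k - Suc a) + (2*a+2)" using a2 kn npos by simp
    ultimately have "V ((k - Suc a) + (2*a+2)) = V (k - Suc a)" by metis
    then have "2*a+2 = n" using Vrep al by simp
    then show ?thesis using n2 by simp
  qed
  have F1: "e (k - i) = \<sigma>" if "1 \<le> i" "i \<le> h - 1" for i
    using upr[of "i-1"] that ah by simp
  have F2: "e (k + i) = - \<sigma>" if "1 \<le> i" "i \<le> h - 1" for i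
  proof -
    show ?thesis using dnr[of "i-1"] that ah ab by simp
  qed
  have F0: "e (k + h) = 0"
  proof -
    have "e (k - h) = 0" using a1 ah h3 by simp
    moreover have "k + h = (k - h) + n" using kn n2 by simp
    ultimately show ?thesis using ep by metis
  qed
  have all: "e (k + j) = - \<sigma> * Pat n h j" if jn: "j < n" for j
  proof -
    consider "j = 0" | "1 \<le> j \<and> j \<le> h - 1" | "j = h" | "h < j \<and> j < n" using jn n2 by linarith
    then show ?thesis
    proof cases
      case 1 then show ?thesis using ek by (simp add: Pat_def)
    next
      case 2 then have "j < h" "j \<noteq> 0" "j \<noteq> h" using h3 by auto
      then show ?thesis using F2[of j] 2 by (simp add: Pat_def)
    next
      case 3 then show ?thesis using F0 by (simp add: Pat_def)
    next
      case 4
      have "k + j = (k - (n - j)) + n" using kn 4 by simp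
      then have "e (k + j) = e (k - (n - j))" using ep by metis
      also have "\<dots> = \<sigma>"
      proof (rule F1)
        show "1 \<le> n - j" "n - j \<le> h - 1" using 4 n2 by auto
      qed
      finally show ?thesis using 4 by (simp add: Pat_def)
    qed
  qed
  have et: "e t = e (k + (t + (n - k mod n)) mod n)" for t
    using emod[of t] emod[of "k + (t + (n - k mod n)) mod n"] idxmod[of n k t] npos by simp
  show ?thesis
  proof (cases "\<sigma> = -1")
    case True
    define s0 where "s0 = (n - k mod n) mod n"
    have "e t = Pat n h ((t + s0) mod n)" for t
    proof -
      have "(t + s0) mod n = (t + (n - k mod n)) mod n" unfolding s0_def by (simp add: mod_add_right_eq)
      then show ?thesis using et[of t] all[of "(t + (n - k mod n)) mod n"] True npos by simp
    qed
    moreover have "s0 < n" unfolding s0_def using npos by simp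
    ultimately show ?thesis by blast
  next
    case False
    then have s1: "\<sigma> = 1" using s by simp
    define s0 where "s0 = (n - k mod n + h) mod n"
    have "e t = Pat n h ((t + s0) mod n)" for t
    proof -
      define j where "j = (t + (n - k mod n)) mod n"
      have jn: "j < n" unfolding j_def using npos by simp
      have "(t + s0) mod n = (t + (n - k mod n) + h) mod n" unfolding s0_def by (simp add: mod_add_right_eq add.assoc)
      also have "\<dots> = (j + h) mod n" unfolding j_def by (simp add: mod_add_left_eq)
      finally have "Pat n h ((t + s0) mod n) = - Pat n h j" using PatShift[of n h j] n2 h3 jn by simp
      then show ?thesis using et[of t] all[OF jn] s1 unfolding j_def by simp
    qed
    moreover have "s0 < n" unfolding s0_def using npos by simp
    ultimately show ?thesis by blast
  qed
qed

lemma classify: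
  "(\<exists>\<sigma>. (\<sigma> = 1 \<or> \<sigma> = -1) \<and> (\<forall>k. e k = \<sigma>) \<and> even h) \<or> (\<exists>s<n. \<forall>t. e t = Pat n h ((t + s) mod n))"
proof (cases "\<exists>k. e k = 0")
  case True
  then obtain k0 where "e k0 = 0" by blast
  from zerocase[OF this] show ?thesis by blast
next
  case False
  then have "\<And>k. e k \<noteq> 0" by blast
  from constcase[OF this] have "(\<forall>k. e k = e 0) \<and> even h" .
  moreover have "e 0 = 1 \<or> e 0 = -1" using er[of 0] False by auto
  ultimately show ?thesis by blast
qed

end


definition Wf :: "nat \<Rightarrow> nat \<Rightarrow> nat \<Rightarrow> int" where
  "Wf n h j = (if j = 0 then 0 else if j \<le> h then int j - 1 else int n - int j) + (if odd j then int h else 0)"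

lemma Wrange: assumes "n = 2*h" "h \<ge> 3" "j < n" shows "0 \<le> Wf n h j \<and> Wf n h j < int n"
  using assms by (auto simp: Wf_def)

lemma Wrec: assumes nh: "n = 2*h" "h \<ge> 3" and j: "j < n"
  shows "Wf n h ((j+1) mod n) = (Wf n h j + int h + Pat n h j) mod int n"
proof -
  consider "j = 0" | "1 \<le> j \<and> j < h" | "j = h" | "h < j \<and> j < n - 1" | "j = n - 1" using j nh by linarith
  then show ?thesis
  proof cases
    case 1 then show ?thesis using nh by (simp add: Wf_def Pat_def)
  next
    case 2
    then have m: "(j+1) mod n = j + 1" using nh by simp
    show ?thesis
    proof (cases "odd j")
      case True
      then have "(Wf n h j + int h + Pat n h j) = int j + 1 * int n" using 2 nh by (simp add: Wf_def Pat_def)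
      then have "(Wf n h j + int h + Pat n h j) mod int n = int j" using 2 nh by (intro modI[where q=1]) auto
      then show ?thesis using m True 2 by (simp add: Wf_def)
    next
      case False
      then have "(Wf n h j + int h + Pat n h j) = int j + int h + 0 * int n" using 2 nh by (simp add: Wf_def Pat_def)
      then have "(Wf n h j + int h + Pat n h j) mod int n = int j + int h" using 2 nh by (intro modI[where q=0]) auto
      then show ?thesis using m False 2 by (simp add: Wf_def)
    qed
  next
    case 3
    then have m: "(j+1) mod n = h + 1" using nh by simp
    show ?thesis
    proof (cases "odd h")
      case True
      then have "(Wf n h j + int h + Pat n h j) = int h - 1 + 1 * int n" using 3 nh by (simp add: Wf_def Pat_def)
      then have "(Wf n h j + int h + Pat n h j) mod int n = int h - 1" using 3 nh by (intro modI[where q=1]) auto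
      then show ?thesis using m True 3 nh by (simp add: Wf_def)
    next
      case False
      then have "(Wf n h j + int h + Pat n h j) = int h - 1 + int h + 0 * int n" using 3 nh by (simp add: Wf_def Pat_def)
      then have "(Wf n h j + int h + Pat n h j) mod int n = int h - 1 + int h" using 3 nh by (intro modI[where q=0]) auto
      then show ?thesis using m False 3 nh by (simp add: Wf_def)
    qed
  next
    case 4
    then have "j + 1 < n" by arith
    then have m: "(j+1) mod n = j + 1" by simp
    show ?thesis
    proof (cases "odd j")
      case True
      then have "(Wf n h j + int h + Pat n h j) = int n - int j - 1 + 1 * int n" using 4 nh by (simp add: Wf_def Pat_def)
      then have "(Wf n h j + int h + Pat n h j) mod int n = int n - int j - 1" using 4 nh by (intro modI[where q=1]) auto
      then show ?thesis using m True 4 nh by (simp add: Wf_def)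
    next
      case False
      then have "(Wf n h j + int h + Pat n h j) = int n - int j - 1 + int h + 0 * int n" using 4 nh by (simp add: Wf_def Pat_def)
      then have "(Wf n h j + int h + Pat n h j) mod int n = int n - int j - 1 + int h" using 4 nh by (intro modI[where q=0]) auto
      then show ?thesis using m False 4 nh by (simp add: Wf_def)
    qed
  next
    case 5
    then have m: "(j+1) mod n = 0" using nh by simp
    have o: "odd j" using 5 nh by simp
    have jj: "j \<noteq> 0" "j \<noteq> h" "\<not> j \<le> h" "\<not> j < h" "int n - int j = 1" using 5 nh by arith+
    have "(Wf n h j + int h + Pat n h j) = 0 + 1 * int n" using jj o nh by (simp add: Wf_def Pat_def)
    then have "(Wf n h j + int h + Pat n h j) mod int n = 0" using nh by (intro modI[where q=1]) auto
    then show ?thesis using m by (simp add: Wf_def)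
  qed
qed

lemma Winj: assumes nh: "n = 2*h" "h \<ge> 3" and ij: "i < n" "j < n" and eq: "Wf n h i = Wf n h j"
  shows "i = j"
proof -
  define f where "f x = (if x = 0 then 0 else if x \<le> h then int x - 1 else int n - int x)" for x
  have W: "Wf n h x = f x + (if odd x then int h else 0)" for x unfolding Wf_def f_def by simp
  have fb: "0 \<le> f x \<and> f x \<le> int h - 1" if "x < n" for x using that nh unfolding f_def by auto
  have par: "odd i = odd j"
  proof (rule ccontr)
    assume "odd i \<noteq> odd j"
    then show False using eq W[of i] W[of j] fb[OF ij(1)] fb[OF ij(2)] by (auto split: if_splits)
  qed
  then have ff: "f i = f j" using eq W[of i] W[of j] by simp
  have nodd: "i + j \<noteq> 2*h + 1" using par by presburger
  have z: "i \<noteq> 0 \<or> j \<noteq> 1" "j \<noteq> 0 \<or> i \<noteq> 1" using par by auto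
  show ?thesis using ff nodd z ij nh unfolding f_def by (auto split: if_splits)
qed


definition Ws :: "nat \<Rightarrow> nat \<Rightarrow> nat \<Rightarrow> nat \<Rightarrow> int" where
  "Ws n h s k = (Wf n h ((k + s) mod n) - Wf n h s) mod int n"

definition Asig :: "nat \<Rightarrow> nat \<Rightarrow> int \<Rightarrow> nat \<Rightarrow> int" where
  "Asig n h \<sigma> k = (int k * (int h + \<sigma>)) mod int n"

definition goodV :: "nat \<Rightarrow> nat \<Rightarrow> (nat \<Rightarrow> int) \<Rightarrow> bool" where
  "goodV n h V \<longleftrightarrow> (\<forall>k. 0 \<le> V k \<and> V k < int n) \<and> (\<forall>k. V (k + n) = V k) \<and>
     (\<forall>i<n. \<forall>j<n. V i = V j \<longrightarrow> i = j) \<and> V 0 = 0 \<and>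
     (\<forall>k. \<exists>e. (e = -1 \<or> e = 0 \<or> e = 1) \<and> V (Suc k) = (V k + int h + e) mod int n)"

lemma good_cyc: assumes "goodV n h V" "n = 2*h" "h \<ge> 3" shows "\<exists>e. cyc n h V e"
proof -
  from assms(1) have "\<forall>k. \<exists>e. (e = -1 \<or> e = 0 \<or> e = 1) \<and> V (Suc k) = (V k + int h + e) mod int n"
    unfolding goodV_def by blast
  then obtain e where e: "\<And>k. (e k = -1 \<or> e k = 0 \<or> e k = 1) \<and> V (Suc k) = (V k + int h + e k) mod int n"
    by metis
  have "cyc n h V e" using assms e unfolding goodV_def cyc_def by blast
  then show ?thesis by blast
qed

lemma nat_mod_cancel: "(a + c) mod n = (b + c) mod n \<Longrightarrow> a mod n = (b::nat) mod n"
proof (cases "n = 0")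
  case True
  assume "(a + c) mod n = (b + c) mod n"
  then show ?thesis using True by simp
next
  case False
  assume h: "(a + c) mod n = (b + c) mod n"
  have "a mod n = (a + n * c) mod n" by simp
  also have "a + n*c = (a + c) + (n*c - c)" using False by (cases n) auto
  also have "(a + c + (n*c - c)) mod n = ((a + c) mod n + (n*c - c)) mod n" by (simp add: mod_add_left_eq)
  also have "\<dots> = ((b + c) mod n + (n*c - c)) mod n" using h by simp
  also have "\<dots> = ((b + c) + (n*c - c)) mod n" by (simp add: mod_add_left_eq)
  also have "(b + c) + (n*c - c) = b + n*c" using False by (cases n) auto
  finally show ?thesis by simp
qed

lemma int_mod_inj: assumes "0 \<le> a" "a < (n::int)" "0 \<le> b" "b < n" "(a - c) mod n = (b - c) mod n" shows "a = b"
proof -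
  have "n dvd (a - c) - (b - c)" using assms(5) by (simp add: mod_eq_dvd_iff)
  then have "n dvd a - b" by simp
  then obtain q where q: "a - b = n * q" by blast
  have "q = 0"
  proof (rule ccontr)
    assume "q \<noteq> 0"
    then have "\<bar>n * q\<bar> \<ge> n" using assms by (simp add: abs_mult)
    then show False using q assms by linarith
  qed
  with q show ?thesis by simp
qed

lemma recover: assumes "(x + p) mod n = (x + p') mod (n::int)" "n \<ge> 3"
  "p = -1 \<or> p = 0 \<or> p = 1" "p' = -1 \<or> p' = 0 \<or> p' = 1" shows "p = p'"
proof -
  have "n dvd (x + p) - (x + p')" using assms(1) by (simp add: mod_eq_dvd_iff)
  then have "n dvd p - p'" by simp
  then obtain q where q: "p - p' = n * q" by blast
  have "q = 0"
  proof (rule ccontr)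
    assume "q \<noteq> 0"
    then have "\<bar>n * q\<bar> \<ge> n" using assms by (simp add: abs_mult)
    then have "\<bar>p - p'\<bar> \<ge> n" using q by simp
    moreover have "\<bar>p - p'\<bar> \<le> 2" using assms(3,4) by auto
    ultimately show False using assms(2) by linarith
  qed
  with q show ?thesis by simp
qed

context
  fixes n h :: nat
  assumes nh: "n = 2*h" and h3: "h \<ge> 3"
begin

lemma npos: "n > 2" using nh h3 by simp

lemma Pat_range: "Pat n h j = -1 \<or> Pat n h j = 0 \<or> Pat n h j = 1" by (simp add: Pat_def)

lemma Ws_step: "Ws n h s (Suc k) = (Ws n h s k + int h + Pat n h ((k + s) mod n)) mod int n"
proof -
  define j where "j = (k + s) mod n"
  have jn: "j < n" unfolding j_def using npos by simp
  have "(Suc k + s) mod n = (j + 1) mod n" unfolding j_def by (simp add: mod_Suc_eq)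
  then have "Wf n h ((Suc k + s) mod n) = (Wf n h j + int h + Pat n h j) mod int n"
    using Wrec[OF nh h3 jn] by simp
  then have "Ws n h s (Suc k) = ((Wf n h j + int h + Pat n h j) mod int n - Wf n h s) mod int n"
    unfolding Ws_def by simp
  also have "\<dots> = (Wf n h j + int h + Pat n h j - Wf n h s) mod int n" by (simp add: mod_diff_left_eq)
  also have "\<dots> = ((Wf n h j - Wf n h s) + (int h + Pat n h j)) mod int n" by (simp add: algebra_simps)
  also have "\<dots> = ((Wf n h j - Wf n h s) mod int n + (int h + Pat n h j)) mod int n" by (simp add: mod_add_left_eq)
  also have "\<dots> = (Ws n h s k + int h + Pat n h ((k + s) mod n)) mod int n"
    unfolding Ws_def j_def by (simp add: algebra_simps)
  finally show ?thesis .
qed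

lemma Ws_good: assumes s: "s < n" shows "goodV n h (Ws n h s)"
proof -
  have r: "0 \<le> Ws n h s k \<and> Ws n h s k < int n" for k unfolding Ws_def using npos by simp
  have p: "Ws n h s (k + n) = Ws n h s k" for k
  proof -
    have "(k + n + s) mod n = (k + s) mod n" by (metis add.commute add.left_commute mod_add_self2)
    then show ?thesis unfolding Ws_def by simp
  qed
  have i: "i = j" if "i < n" "j < n" "Ws n h s i = Ws n h s j" for i j
  proof -
    have a: "Wf n h ((i + s) mod n) = Wf n h ((j + s) mod n)"
      using that(3) unfolding Ws_def
      by (rule int_mod_inj[rotated 4]) (use Wrange[OF nh h3] npos in auto)
    have "(i + s) mod n = (j + s) mod n" using Winj[OF nh h3 _ _ a] npos by simp
    then have "i mod n = j mod n" by (rule nat_mod_cancel)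
    then show ?thesis using that by simp
  qed
  have z: "Ws n h s 0 = 0" unfolding Ws_def using s by simp
  have st: "\<exists>e. (e = -1 \<or> e = 0 \<or> e = 1) \<and> Ws n h s (Suc k) = (Ws n h s k + int h + e) mod int n" for k
    using Ws_step[of s k] Pat_range by blast
  show ?thesis unfolding goodV_def using r p i z st by blast
qed

lemma coprime_hs: assumes "even h" "\<sigma> = 1 \<or> \<sigma> = -1" shows "coprime (int h + \<sigma>) (int n)"
proof (rule coprimeI)
  fix d assume d1: "d dvd int h + \<sigma>" and d2: "d dvd int n"
  have "d dvd 2 * (int h + \<sigma>)" using d1 by (rule dvd_mult)
  then have "d dvd 2 * (int h + \<sigma>) - int n" using d2 by (rule dvd_diff)
  then have "d dvd 2 * \<sigma>" using nh by simp
  then have d3: "d dvd 2" using assms(2) by auto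
  have "odd (int h + \<sigma>)" using assms by auto
  then have od: "odd d" using d1 by (meson dvd_trans)
  have "\<bar>d\<bar> \<le> 2" using dvd_imp_le_int[OF _ d3] by simp
  moreover have "d \<noteq> 0" using od by auto
  moreover have "\<bar>d\<bar> \<noteq> 2"
  proof
    assume "\<bar>d\<bar> = 2"
    then have "d = 2 \<or> d = -2" by arith
    then show False using od by auto
  qed
  ultimately have "\<bar>d\<bar> = 1" by linarith
  then show "is_unit d" by (simp add: zdvd1_eq)
qed

lemma A_good: assumes ev: "even h" and s: "\<sigma> = 1 \<or> \<sigma> = -1" shows "goodV n h (Asig n h \<sigma>)"
proof -
  have r: "0 \<le> Asig n h \<sigma> k \<and> Asig n h \<sigma> k < int n" for k unfolding Asig_def using npos by simp
  have p: "Asig n h \<sigma> (k + n) = Asig n h \<sigma> k" for k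
  proof -
    have "int (k + n) * (int h + \<sigma>) = int k * (int h + \<sigma>) + (int h + \<sigma>) * int n" by (simp add: algebra_simps)
    then show ?thesis unfolding Asig_def by simp
  qed
  have i: "i = j" if "i < n" "j < n" "Asig n h \<sigma> i = Asig n h \<sigma> j" for i j
  proof -
    have "int n dvd int i * (int h + \<sigma>) - int j * (int h + \<sigma>)"
      using that(3) unfolding Asig_def by (simp add: mod_eq_dvd_iff)
    then have "int n dvd (int i - int j) * (int h + \<sigma>)" by (simp add: algebra_simps)
    then have "int n dvd (int i - int j)"
      using coprime_dvd_mult_left_iff coprime_hs[OF ev s] by (metis coprime_commute)
    then obtain q where q: "int i - int j = int n * q" by blast
    have "q = 0"
    proof (rule ccontr)
      assume "q \<noteq> 0"
      then have "1 \<le> \<bar>q\<bar>" by arith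
      then have "int n * 1 \<le> int n * \<bar>q\<bar>" by (intro mult_left_mono) simp_all
      then have "\<bar>int n * q\<bar> \<ge> int n" by (simp add: abs_mult)
      then show False using q that by linarith
    qed
    with q show ?thesis by simp
  qed
  have z: "Asig n h \<sigma> 0 = 0" unfolding Asig_def by simp
  have st: "Asig n h \<sigma> (Suc k) = (Asig n h \<sigma> k + int h + \<sigma>) mod int n" for k
  proof -
    have "Asig n h \<sigma> (Suc k) = (int k * (int h + \<sigma>) + (int h + \<sigma>)) mod int n"
      unfolding Asig_def by (simp add: algebra_simps)
    also have "\<dots> = (Asig n h \<sigma> k + (int h + \<sigma>)) mod int n" unfolding Asig_def by (simp add: mod_add_left_eq)
    finally show ?thesis by (simp add: algebra_simps)
  qed
  show ?thesis unfolding goodV_def using r p i z st s by blast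
qed

lemma good_class:
  assumes g: "goodV n h V"
  shows "V \<in> Ws n h ` {..<n} \<or> (even h \<and> (V = Asig n h 1 \<or> V = Asig n h (-1)))"
proof -
  obtain e where c: "cyc n h V e" using good_cyc[OF g nh h3] by blast
  have V0: "V 0 = 0" using g unfolding goodV_def by simp
  note Vs = cyc.Vs[OF c]
  from cyc.classify[OF c] show ?thesis
  proof
    assume "\<exists>\<sigma>. (\<sigma> = 1 \<or> \<sigma> = -1) \<and> (\<forall>k. e k = \<sigma>) \<and> even h"
    then obtain \<sigma> where s: "\<sigma> = 1 \<or> \<sigma> = -1" "\<And>k. e k = \<sigma>" "even h" by blast
    have "V k = Asig n h \<sigma> k" for k
    proof (induction k)
      case 0 then show ?case using V0 by (simp add: Asig_def)
    next
      case (Suc k)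
      have "Asig n h \<sigma> (Suc k) = (int k * (int h + \<sigma>) + (int h + \<sigma>)) mod int n"
        unfolding Asig_def by (simp add: algebra_simps)
      also have "\<dots> = (Asig n h \<sigma> k + (int h + \<sigma>)) mod int n" unfolding Asig_def by (simp add: mod_add_left_eq)
      finally show ?case using Vs[of k] Suc s(2)[of k] by (simp add: algebra_simps)
    qed
    then have "V = Asig n h \<sigma>" by blast
    then show ?thesis using s by auto
  next
    assume "\<exists>s<n. \<forall>t. e t = Pat n h ((t + s) mod n)"
    then obtain s where s: "s < n" "\<And>t. e t = Pat n h ((t + s) mod n)" by blast
    have "V k = Ws n h s k" for k
    proof (induction k)
      case 0 then show ?case using V0 s by (simp add: Ws_def)
    next
      case (Suc k)
      then show ?case using Vs[of k] s(2)[of k] Ws_step[of s k] by simp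
    qed
    then have "V = Ws n h s" by blast
    then show ?thesis using s by auto
  qed
qed

lemma A_step: "Asig n h \<sigma> (Suc k) = (Asig n h \<sigma> k + int h + \<sigma>) mod int n"
proof -
  have "Asig n h \<sigma> (Suc k) = (int k * (int h + \<sigma>) + (int h + \<sigma>)) mod int n"
    unfolding Asig_def by (simp add: algebra_simps)
  also have "\<dots> = (Asig n h \<sigma> k + (int h + \<sigma>)) mod int n" unfolding Asig_def by (simp add: mod_add_left_eq)
  finally show ?thesis by (simp add: algebra_simps)
qed

lemma n3: "int n \<ge> 3" using npos by simp

lemma Ws_inj: assumes "s < n" "s' < n" "Ws n h s = Ws n h s'" shows "s = s'"
proof -
  have P: "Pat n h ((k + s) mod n) = Pat n h ((k + s') mod n)" for k
  proof -
    have "(Ws n h s k + int h + Pat n h ((k + s) mod n)) mod int n = (Ws n h s k + int h + Pat n h ((k + s') mod n)) mod int n"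
      using Ws_step[of s k] Ws_step[of s' k] assms(3) by simp
    then show ?thesis by (rule recover[OF _ n3 Pat_range Pat_range])
  qed
  define t where "t = (n - s + s') mod n"
  have "(n - s + s) mod n = 0" using assms by simp
  then have "Pat n h t = 0" using P[of "n - s"] unfolding t_def by (simp add: Pat_def)
  then have t0: "t = 0 \<or> t = h" by (auto simp: Pat_def split: if_splits)
  have "n - s + 1 + s = 1 + n" using assms by simp
  moreover have "(1 + n) mod n = 1 mod n" by (rule mod_add_self2)
  moreover have "1 mod n = 1" using npos by simp
  ultimately have "(n - s + 1 + s) mod n = 1" by simp
  moreover have "(n - s + 1 + s') mod n = (t + 1) mod n" unfolding t_def by (simp add: mod_Suc_eq)
  ultimately have "Pat n h ((t + 1) mod n) = Pat n h 1" using P[of "n - s + 1"] by simp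
  also have "Pat n h 1 = 1" using h3 by (simp add: Pat_def)
  finally have t1: "Pat n h ((t + 1) mod n) = 1" .
  have "t \<noteq> h"
  proof
    assume "t = h"
    then have "(t + 1) mod n = h + 1" using nh h3 by simp
    then show False using t1 nh h3 by (simp add: Pat_def)
  qed
  with t0 have "t = 0" by simp
  then have "n dvd (n - s + s')" unfolding t_def by (simp add: mod_eq_0_iff_dvd)
  then obtain q where q: "n - s + s' = n * q" by blast
  have "n * q < n * 2" using q assms by linarith
  then have "q < 2" by simp
  moreover have "q > 0" using q assms by (cases q) auto
  ultimately have "q = 1" by simp
  then show ?thesis using q assms by simp
qed

lemma A_notW: assumes "s < n" "\<sigma> = 1 \<or> \<sigma> = -1" shows "Asig n h \<sigma> \<noteq> Ws n h s"
proof
  assume eq: "Asig n h \<sigma> = Ws n h s"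
  define k where "k = n - s"
  have "(Ws n h s k + int h + \<sigma>) mod int n = (Ws n h s k + int h + Pat n h ((k + s) mod n)) mod int n"
    using A_step[of \<sigma> k] Ws_step[of s k] eq by simp
  moreover have sr: "\<sigma> = -1 \<or> \<sigma> = 0 \<or> \<sigma> = 1" using assms(2) by auto
  ultimately have "\<sigma> = Pat n h ((k + s) mod n)"
    by (rule recover[OF _ n3 _ Pat_range])
  moreover have "(k + s) mod n = 0" unfolding k_def using assms by simp
  ultimately show False using assms(2) by (simp add: Pat_def)
qed

lemma A_ne: "Asig n h 1 \<noteq> Asig n h (-1)"
proof
  assume "Asig n h 1 = Asig n h (-1)"
  then have "(Asig n h 1 0 + int h + 1) mod int n = (Asig n h 1 0 + int h + (-1)) mod int n"
    using A_step[of 1 0] A_step[of "-1" 0] by (simp add: Asig_def)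
  then have "(1::int) = -1" by (rule recover[OF _ n3]) auto
  then show False by simp
qed

lemma Gset: "{V. goodV n h V} = Ws n h ` {..<n} \<union> (if even h then {Asig n h 1, Asig n h (-1)} else {})"
proof
  show "{V. goodV n h V} \<subseteq> Ws n h ` {..<n} \<union> (if even h then {Asig n h 1, Asig n h (-1)} else {})"
    using good_class by auto
  show "Ws n h ` {..<n} \<union> (if even h then {Asig n h 1, Asig n h (-1)} else {}) \<subseteq> {V. goodV n h V}"
    using Ws_good A_good by (auto split: if_splits)
qed

lemma card_G: "card {V. goodV n h V} = (if even h then n + 2 else n)"
proof -
  have c1: "card (Ws n h ` {..<n}) = n"
    using Ws_inj by (subst card_image) (auto simp: inj_on_def)
  show ?thesis
  proof (cases "even h")
    case True
    have d: "Ws n h ` {..<n} \<inter> {Asig n h 1, Asig n h (-1)} = {}"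
      using A_notW by fastforce
    have "card (Ws n h ` {..<n} \<union> {Asig n h 1, Asig n h (-1)}) = card (Ws n h ` {..<n}) + card {Asig n h 1, Asig n h (-1)}"
      by (rule card_Un_disjoint) (use d in auto)
    then have "card {V. goodV n h V} = card (Ws n h ` {..<n}) + card {Asig n h 1, Asig n h (-1)}"
      unfolding Gset using True by simp
    then show ?thesis using c1 A_ne True by simp
  next
    case False
    then show ?thesis unfolding Gset using c1 by simp
  qed
qed

end


definition rof :: "nat \<Rightarrow> (nat \<Rightarrow> int) \<Rightarrow> nat \<Rightarrow> nat" where
  "rof n V j = (if j < n then nat (V j) + 1 else 0)"

definition Vof :: "nat \<Rightarrow> (nat \<Rightarrow> nat) \<Rightarrow> nat \<Rightarrow> int" where
  "Vof n r k = int (r (k mod n)) - 1"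

definition Rset :: "nat \<Rightarrow> nat \<Rightarrow> (nat \<Rightarrow> nat) set" where
  "Rset n h = {r. (\<forall>j. n \<le> j \<longrightarrow> r j = 0) \<and> bij_betw r {0..<n} {1..n} \<and> r 0 = 1 \<and>
     (\<forall>k<n. h - 1 \<le> sym_dist n (r k) (r ((k+1) mod n)))}"

lemma modsmall: assumes "- m < x" "x < (m::int)" shows "x mod m = (if x < 0 then x + m else x)"
proof (cases "x < 0")
  case True
  then have "x mod m = x + m" using assms by (intro modI[where q="-1"]) auto
  then show ?thesis using True by simp
next
  case False
  then show ?thesis using assms by simp
qed

lemma sd_int: "0 \<le> a \<Longrightarrow> 0 \<le> b \<Longrightarrow> sym_dist n (nat a + 1) (nat b + 1) = nat (min ((a - b) mod int n) ((b - a) mod int n))"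
  unfolding sym_dist_def by simp

lemma per_mod: fixes V :: "nat \<Rightarrow> 'a" and n :: nat assumes "\<And>k. V (k + n) = V k" shows "V k = V (k mod n)"
proof -
  have pm: "V (j + m * n) = V j" for j m
  proof (induction m)
    case 0 show ?case by simp
  next
    case (Suc m)
    have "j + Suc m * n = (j + m*n) + n" by simp
    then have "V (j + Suc m * n) = V (j + m*n)" using assms by metis
    then show ?case using Suc by simp
  qed
  have "V k = V (k mod n + (k div n) * n)" by simp
  then show ?thesis using pm[of "k mod n" "k div n"] by simp
qed

context
  fixes n h :: nat
  assumes nh: "n = 2*h" and h3: "h \<ge> 3"
begin

lemma SDval: assumes a: "0 \<le> a" "a < int n" and b: "b = (a + int h + e) mod int n" and e: "e = -1 \<or> e = 0 \<or> e = 1"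
  shows "sym_dist n (nat a + 1) (nat b + 1) = (if e = 0 then h else h - 1)"
proof -
  have b2: "b = a + int h + e \<or> b = a + int h + e - int n"
    using modcases[of "a + int h + e" "int n"] a e b nh h3 by auto
  have b0: "0 \<le> b" "b < int n" using b nh h3 by auto
  have m1: "(a - b) mod int n = int h - e"
  proof -
    from b2 show ?thesis
    proof
      assume "b = a + int h + e"
      then have "a - b = (int h - e) + (-1) * int n" using nh by simp
      then show ?thesis using e nh h3 by (intro modI[where q="-1"]) auto
    next
      assume "b = a + int h + e - int n"
      then have "a - b = (int h - e) + 0 * int n" using nh by simp
      then show ?thesis using e nh h3 by (intro modI[where q=0]) auto
    qed
  qed
  have m2: "(b - a) mod int n = int h + e"
  proof -
    from b2 show ?thesis
    proof
      assume "b = a + int h + e"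
      then have "b - a = (int h + e) + 0 * int n" using nh by simp
      then show ?thesis using e nh h3 by (intro modI[where q=0]) auto
    next
      assume "b = a + int h + e - int n"
      then have "b - a = (int h + e) + (-1) * int n" using nh by simp
      then show ?thesis using e nh h3 by (intro modI[where q="-1"]) auto
    qed
  qed
  show ?thesis using sd_int[OF a(1) b0(1)] m1 m2 e h3 by auto
qed

lemma SDinv: assumes a: "0 \<le> a" "a < int n" and b: "0 \<le> b" "b < int n"
  and d: "h - 1 \<le> sym_dist n (nat a + 1) (nat b + 1)"
  shows "\<exists>e. (e = -1 \<or> e = 0 \<or> e = 1) \<and> b = (a + int h + e) mod int n"
proof -
  have m1: "(a - b) mod int n = (if a - b < 0 then a - b + int n else a - b)"
    by (rule modsmall) (use a b in auto)
  have m2: "(b - a) mod int n = (if b - a < 0 then b - a + int n else b - a)"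
    by (rule modsmall) (use a b in auto)
  have dd: "int h - 1 \<le> min ((a - b) mod int n) ((b - a) mod int n)"
    using d sd_int[OF a(1) b(1)] h3 by auto
  show ?thesis
  proof (cases "b - a \<ge> 0")
    case True
    define e where "e = b - a - int h"
    have "b - a \<noteq> 0" using dd m1 m2 h3 True by auto
    then have e3: "e = -1 \<or> e = 0 \<or> e = 1" using dd m1 m2 True nh unfolding e_def by (auto split: if_splits)
    have "(a + int h + e) mod int n = b" using b unfolding e_def by simp
    then show ?thesis using e3 by metis
  next
    case False
    define e where "e = b - a + int n - int h"
    have e3: "e = -1 \<or> e = 0 \<or> e = 1" using dd m1 m2 False nh unfolding e_def by (auto split: if_splits)
    have "a + int h + e = b + 1 * int n" unfolding e_def by simp
    then have "(a + int h + e) mod int n = b" using b by (intro modI[where q=1]) auto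
    then show ?thesis using e3 by metis
  qed
qed

lemma npos': "n > 2" using nh h3 by simp

lemma rof_in: assumes g: "goodV n h V" shows "rof n V \<in> Rset n h"
proof -
  have r: "0 \<le> V k" "V k < int n" for k using g unfolding goodV_def by auto
  have p: "V (k + n) = V k" for k using g unfolding goodV_def by auto
  have inj: "i = j" if "i < n" "j < n" "V i = V j" for i j using g that unfolding goodV_def by auto
  have V0: "V 0 = 0" using g unfolding goodV_def by auto
  have st: "\<exists>e. (e = -1 \<or> e = 0 \<or> e = 1) \<and> V (Suc k) = (V k + int h + e) mod int n" for k
    using g unfolding goodV_def by auto
  have z: "\<forall>j. n \<le> j \<longrightarrow> rof n V j = 0" unfolding rof_def by simp
  have io: "inj_on (rof n V) {0..<n}"
  proof (rule inj_onI)
    fix i j assume "i \<in> {0..<n}" "j \<in> {0..<n}" "rof n V i = rof n V j"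
    then have "V i = V j" using r unfolding rof_def by (simp add: eq_nat_nat_iff)
    then show "i = j" using inj \<open>i \<in> {0..<n}\<close> \<open>j \<in> {0..<n}\<close> by simp
  qed
  have sub: "rof n V ` {0..<n} \<subseteq> {1..n}"
  proof
    fix x assume "x \<in> rof n V ` {0..<n}"
    then obtain j where j: "j < n" "x = nat (V j) + 1" unfolding rof_def by auto
    have "nat (V j) < n" using r[of j] by linarith
    then show "x \<in> {1..n}" using j by simp
  qed
  have "card (rof n V ` {0..<n}) = card {1..n}" using io by (simp add: card_image)
  then have "rof n V ` {0..<n} = {1..n}" using sub by (simp add: card_subset_eq)
  then have bij: "bij_betw (rof n V) {0..<n} {1..n}" using io unfolding bij_betw_def by simp
  have r0: "rof n V 0 = 1" using V0 npos' unfolding rof_def by simp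
  have sd: "h - 1 \<le> sym_dist n (rof n V k) (rof n V ((k+1) mod n))" if "k < n" for k
  proof -
    have "V ((k+1) mod n) = V (Suc k)" using per_mod[of V n "Suc k", OF p] by simp
    then have e1: "rof n V ((k+1) mod n) = nat (V (Suc k)) + 1" unfolding rof_def using npos' by simp
    have e2: "rof n V k = nat (V k) + 1" unfolding rof_def using that by simp
    obtain e where e: "e = -1 \<or> e = 0 \<or> e = 1" "V (Suc k) = (V k + int h + e) mod int n" using st by blast
    show ?thesis unfolding e1 e2 using SDval[OF r(1)[of k] r(2)[of k] e(2) e(1)] by auto
  qed
  show ?thesis unfolding Rset_def using z bij r0 sd by blast
qed

lemma Vof_good: assumes R: "r \<in> Rset n h" shows "goodV n h (Vof n r)" and "rof n (Vof n r) = r"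
proof -
  have z: "\<And>j. n \<le> j \<Longrightarrow> r j = 0" and bij: "bij_betw r {0..<n} {1..n}" and r0: "r 0 = 1"
    and sd: "\<And>k. k < n \<Longrightarrow> h - 1 \<le> sym_dist n (r k) (r ((k+1) mod n))"
    using R unfolding Rset_def by auto
  have rr: "1 \<le> r j \<and> r j \<le> n" if "j < n" for j using bij that unfolding bij_betw_def by auto
  have rng: "0 \<le> Vof n r k \<and> Vof n r k < int n" for k
    using rr[of "k mod n"] npos' unfolding Vof_def by auto
  have per: "Vof n r (k + n) = Vof n r k" for k unfolding Vof_def by simp
  have inj: "\<forall>i<n. \<forall>j<n. Vof n r i = Vof n r j \<longrightarrow> i = j"
    using bij unfolding Vof_def bij_betw_def inj_on_def by auto
  have V0: "Vof n r 0 = 0" unfolding Vof_def using r0 by simp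
  have rv: "r (k mod n) = nat (Vof n r k) + 1" for k using rr[of "k mod n"] npos' unfolding Vof_def by auto
  have st: "\<exists>e. (e = -1 \<or> e = 0 \<or> e = 1) \<and> Vof n r (Suc k) = (Vof n r k + int h + e) mod int n" for k
  proof -
    have "(k mod n + 1) mod n = Suc k mod n" by (simp add: mod_Suc_eq)
    then have "h - 1 \<le> sym_dist n (r (k mod n)) (r (Suc k mod n))" using sd[of "k mod n"] npos' by simp
    then have "h - 1 \<le> sym_dist n (nat (Vof n r k) + 1) (nat (Vof n r (Suc k)) + 1)" using rv[of k] rv[of "Suc k"] by simp
    then show ?thesis using SDinv rng by blast
  qed
  show "goodV n h (Vof n r)" unfolding goodV_def using rng per inj V0 st by blast
  show "rof n (Vof n r) = r"
  proof
    fix j show "rof n (Vof n r) j = r j"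
      using rr[of j] z[of j] unfolding rof_def Vof_def by auto
  qed
qed

lemma rof_inj: "inj_on (rof n) {V. goodV n h V}"
proof (rule inj_onI)
  fix V V' assume g: "V \<in> {V. goodV n h V}" "V' \<in> {V. goodV n h V}" and eq: "rof n V = rof n V'"
  have r: "0 \<le> V k" "0 \<le> V' k" for k using g unfolding goodV_def by auto
  have p: "V (k + n) = V k" "V' (k + n) = V' k" for k using g unfolding goodV_def by auto
  have "V j = V' j" if "j < n" for j
  proof -
    have "rof n V j = rof n V' j" using eq by simp
    then show ?thesis using that r[of j] unfolding rof_def by (simp add: eq_nat_nat_iff)
  qed
  then have "V k = V' k" for k using per_mod[of V n k] per_mod[of V' n k] p npos' by simp
  then show "V = V'" by blast
qed

lemma Rset_eq: "Rset n h = rof n ` {V. goodV n h V}"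
proof
  show "Rset n h \<subseteq> rof n ` {V. goodV n h V}"
  proof
    fix r assume "r \<in> Rset n h"
    then show "r \<in> rof n ` {V. goodV n h V}" using Vof_good by (metis image_eqI mem_Collect_eq)
  qed
  show "rof n ` {V. goodV n h V} \<subseteq> Rset n h" using rof_in by blast
qed

lemma card_R: "card (Rset n h) = (if even h then n + 2 else n)"
  unfolding Rset_eq using card_image[OF rof_inj] card_G[OF nh h3] by simp

lemma R_min: assumes R: "r \<in> Rset n h" shows "\<exists>k<n. sym_dist n (r k) (r ((k+1) mod n)) = h - 1"
proof -
  have g: "goodV n h (Vof n r)" and rv: "rof n (Vof n r) = r" using Vof_good[OF R] by auto
  obtain e where c: "cyc n h (Vof n r) e" using good_cyc[OF g nh h3] by blast
  have "\<exists>k<2. e k \<noteq> 0"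
  proof (cases "e 0 = 0")
    case True
    then have "e (Suc 0) \<noteq> 0" using cyc.Fz[OF c, of 0] by simp
    then show ?thesis by (intro exI[of _ "Suc 0"]) auto
  next
    case False
    then show ?thesis by (intro exI[of _ 0]) auto
  qed
  then obtain k where k: "k < 2" "e k \<noteq> 0" by blast
  have r: "0 \<le> Vof n r j" "Vof n r j < int n" for j using g unfolding goodV_def by auto
  have p: "Vof n r (j + n) = Vof n r j" for j using g unfolding goodV_def by auto
  have "Vof n r ((k+1) mod n) = Vof n r (Suc k)" using per_mod[of "Vof n r" n "Suc k", OF p] by simp
  moreover have "(k+1) mod n < n" using npos' by simp
  moreover have "rof n (Vof n r) ((k+1) mod n) = nat (Vof n r ((k+1) mod n)) + 1"
    unfolding rof_def using \<open>(k+1) mod n < n\<close> by simp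
  ultimately have e1: "r ((k+1) mod n) = nat (Vof n r (Suc k)) + 1" using rv by simp
  have "k < n" using k npos' by simp
  then have "rof n (Vof n r) k = nat (Vof n r k) + 1" unfolding rof_def by simp
  then have e2: "r k = nat (Vof n r k) + 1" using rv by simp
  have "sym_dist n (r k) (r ((k+1) mod n)) = h - 1"
    unfolding e1 e2 using SDval[OF r(1) r(2) cyc.Vs[OF c, of k] cyc.er[OF c, of k]] k by simp
  then show ?thesis using \<open>k < n\<close> by blast
qed

end


definition circ :: "nat \<Rightarrow> (nat \<Rightarrow> nat) \<Rightarrow> nat \<Rightarrow> nat \<Rightarrow> nat" where
  "circ n r i j = (if i < n \<and> j < n then r ((j + n - i) mod n) else 0)"

definition bcirc :: "nat \<Rightarrow> (nat \<Rightarrow> nat) \<Rightarrow> nat \<Rightarrow> nat \<Rightarrow> nat" where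
  "bcirc n r i j = (if i < n \<and> j < n then r ((i + j) mod n) else 0)"

lemma sd_comm: "sym_dist n a b = sym_dist n b a"
  unfolding sym_dist_def by (simp add: min.commute)

lemma bij_mod: assumes "\<And>x y. x < n \<Longrightarrow> y < n \<Longrightarrow> f x = f y \<Longrightarrow> x = y" "\<And>x. x < n \<Longrightarrow> f x < (n::nat)"
  shows "bij_betw f {0..<n} {0..<n}"
proof -
  have i: "inj_on f {0..<n}" using assms(1) by (auto simp: inj_on_def)
  have s: "f ` {0..<n} \<subseteq> {0..<n}" using assms(2) by auto
  have "f ` {0..<n} = {0..<n}" using endo_inj_surj[OF _ s i] by simp
  then show ?thesis using i unfolding bij_betw_def by simp
qed

lemma ID_circ: assumes n: "n \<ge> 2"
  shows "inner_distance n (circ n r) = Min ((\<lambda>k. sym_dist n (r k) (r ((k+1) mod n))) ` {..<n})"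
proof -
  define g where "g k = sym_dist n (r k) (r ((k+1) mod n))" for k
  define H where "H = {sym_dist n (circ n r i j) (circ n r i (j+1)) | i j. i < n \<and> j + 1 < n}"
  define Vt where "Vt = {sym_dist n (circ n r i j) (circ n r (i+1) j) | i j. i + 1 < n \<and> j < n}"
  have H1: "H \<subseteq> g ` {..<n}"
  proof
    fix x assume "x \<in> H"
    then obtain i j where ij: "i < n" "j + 1 < n" "x = sym_dist n (circ n r i j) (circ n r i (j+1))"
      unfolding H_def by blast
    have "j + 1 + n - i = Suc (j + n - i)" using ij by simp
    then have "(j + 1 + n - i) mod n = ((j + n - i) mod n + 1) mod n" by (simp add: mod_Suc_eq)
    then have "x = g ((j + n - i) mod n)" using ij unfolding g_def circ_def by simp
    then show "x \<in> g ` {..<n}" using n by simp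
  qed
  have H2: "g ` {..<n} \<subseteq> H"
  proof
    fix x assume "x \<in> g ` {..<n}"
    then obtain k where k: "k < n" "x = g k" by blast
    show "x \<in> H"
    proof (cases "k + 1 < n")
      case True
      have "Suc (k+n) = Suc k + n" by simp
      then have "Suc (k+n) mod n = Suc k mod n" by (metis mod_add_self2)
      then have "Suc (k+n) mod n = Suc k" using True by simp
      then have "x = sym_dist n (circ n r 0 k) (circ n r 0 (k+1))" using k True unfolding g_def circ_def by simp
      moreover have "(0::nat) < n" using n by simp
      ultimately show ?thesis unfolding H_def using True by blast
    next
      case False
      then have kk: "k = n - 1" using k by simp
      have "x = sym_dist n (circ n r 1 0) (circ n r 1 (0+1))" using kk n k unfolding g_def circ_def by simp
      then show ?thesis unfolding H_def using n by fastforce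
    qed
  qed
  have V1: "Vt \<subseteq> g ` {..<n}"
  proof
    fix x assume "x \<in> Vt"
    then obtain i j where ij: "i + 1 < n" "j < n" "x = sym_dist n (circ n r i j) (circ n r (i+1) j)"
      unfolding Vt_def by blast
    define y where "y = j + n - (i+1)"
    have "j + n - i = Suc y" using ij unfolding y_def by simp
    then have "(j + n - i) mod n = (y mod n + 1) mod n" by (simp add: mod_Suc_eq)
    then have "x = sym_dist n (r ((y mod n + 1) mod n)) (r (y mod n))" using ij unfolding circ_def y_def by simp
    then have "x = g (y mod n)" unfolding g_def by (simp add: sd_comm)
    then show "x \<in> g ` {..<n}" using n by simp
  qed
  have "H \<union> Vt = g ` {..<n}" using H1 H2 V1 by blast
  then show ?thesis unfolding inner_distance_def H_def Vt_def g_def by simp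
qed

lemma ID_bcirc: assumes n: "n \<ge> 2"
  shows "inner_distance n (bcirc n r) = Min ((\<lambda>k. sym_dist n (r k) (r ((k+1) mod n))) ` {..<n})"
proof -
  define g where "g k = sym_dist n (r k) (r ((k+1) mod n))" for k
  define H where "H = {sym_dist n (bcirc n r i j) (bcirc n r i (j+1)) | i j. i < n \<and> j + 1 < n}"
  define Vt where "Vt = {sym_dist n (bcirc n r i j) (bcirc n r (i+1) j) | i j. i + 1 < n \<and> j < n}"
  have H1: "H \<subseteq> g ` {..<n}"
  proof
    fix x assume "x \<in> H"
    then obtain i j where ij: "i < n" "j + 1 < n" "x = sym_dist n (bcirc n r i j) (bcirc n r i (j+1))"
      unfolding H_def by blast
    have "(i + (j + 1)) mod n = ((i + j) mod n + 1) mod n" by (simp add: mod_Suc_eq)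
    then have "x = g ((i + j) mod n)" using ij unfolding g_def bcirc_def by simp
    then show "x \<in> g ` {..<n}" using n by simp
  qed
  have H2: "g ` {..<n} \<subseteq> H"
  proof
    fix x assume "x \<in> g ` {..<n}"
    then obtain k where k: "k < n" "x = g k" by blast
    show "x \<in> H"
    proof (cases "k + 1 < n")
      case True
      have "x = sym_dist n (bcirc n r 0 k) (bcirc n r 0 (k+1))" using k True unfolding g_def bcirc_def by simp
      moreover have "(0::nat) < n" using n by simp
      ultimately show ?thesis unfolding H_def using True by blast
    next
      case False
      then have kk: "k = n - 1" using k by simp
      have a0: "1 + (n - 2 + 1) = n" "k + 1 = n" using kk n by auto
      have a: "1 + (n - 2) = k" "(1 + (n - 2 + 1)) mod n = (k + 1) mod n" using kk n apply simp
        by (simp only: a0)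
      have n1: "1 < n" "n - 2 < n" "n - 2 + 1 < n" using n by auto
      have b1: "bcirc n r 1 (n-2) = r k" unfolding bcirc_def using n1 a(1) by simp
      have b2: "bcirc n r 1 (n-2+1) = r ((k+1) mod n)" unfolding bcirc_def using n1 a(2) by presburger
      have "x = sym_dist n (bcirc n r 1 (n-2)) (bcirc n r 1 (n-2+1))"
        using k(2) unfolding g_def b1 b2 by simp
      then show ?thesis unfolding H_def using n by fastforce
    qed
  qed
  have V1: "Vt \<subseteq> g ` {..<n}"
  proof
    fix x assume "x \<in> Vt"
    then obtain i j where ij: "i + 1 < n" "j < n" "x = sym_dist n (bcirc n r i j) (bcirc n r (i+1) j)"
      unfolding Vt_def by blast
    have "(i + 1 + j) mod n = ((i + j) mod n + 1) mod n" by (simp add: mod_Suc_eq)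
    then have "x = g ((i + j) mod n)" using ij unfolding g_def bcirc_def by simp
    then show "x \<in> g ` {..<n}" using n by simp
  qed
  have "H \<union> Vt = g ` {..<n}" using H1 H2 V1 by blast
  then show ?thesis unfolding inner_distance_def H_def Vt_def g_def by simp
qed

lemma circ_form: assumes c: "circulant n L" and ij: "i < n" "j < n"
  shows "L i j = L 0 ((j + n - i) mod n)"
  using ij
proof (induction i arbitrary: j)
  case 0 then show ?case by simp
next
  case (Suc i)
  define j' where "j' = (j + n - 1) mod n"
  have jn: "j' < n" unfolding j'_def using Suc.prems by simp
  have "(j' + 1) mod n = (j + n - 1 + 1) mod n" unfolding j'_def by (simp add: mod_Suc_eq)
  also have "j + n - 1 + 1 = j + n" using Suc.prems by simp
  finally have jj: "(j' + 1) mod n = j" using Suc.prems by simp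
  have "L (i+1) ((j'+1) mod n) = L i j'" using c Suc.prems jn unfolding circulant_def by simp
  then have "L (Suc i) j = L 0 ((j' + n - i) mod n)" using jj Suc.IH[of j'] Suc.prems jn by simp
  also have "(j' + n - i) mod n = (j' + (n - i)) mod n" using Suc.prems by simp
  also have "\<dots> = ((j + n - 1) + (n - i)) mod n" unfolding j'_def by (rule mod_add_left_eq)
  also have "(j + n - 1) + (n - i) = (j + n - Suc i) + n" using Suc.prems by simp
  also have "((j + n - Suc i) + n) mod n = (j + n - Suc i) mod n" by (rule mod_add_self2)
  finally show ?case .
qed

lemma bcirc_form: assumes c: "back_circulant n L" and ij: "i < n" "j < n"
  shows "L i j = L 0 ((i + j) mod n)"
  using ij
proof (induction i arbitrary: j)
  case 0 then show ?case by simp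
next
  case (Suc i)
  have jn: "(j + 1) mod n < n" using Suc.prems by simp
  have "L (Suc i) j = L i ((j+1) mod n)" using c Suc.prems unfolding back_circulant_def by simp
  also have "\<dots> = L 0 ((i + (j + 1) mod n) mod n)" using Suc.IH[OF _ jn] Suc.prems by simp
  also have "(i + (j + 1) mod n) mod n = (Suc i + j) mod n" by (simp add: mod_add_right_eq)
  finally show ?case .
qed

context
  fixes n h :: nat
  assumes nh: "n = 2*h" and h3: "h \<ge> 3"
begin

lemma n2': "n \<ge> 2" "n > 0" using nh h3 by auto

lemma Rfacts: assumes "r \<in> Rset n h"
  shows "bij_betw r {0..<n} {1..n}" "r 0 = 1" "\<And>j. n \<le> j \<Longrightarrow> r j = 0"
    "\<And>k. k < n \<Longrightarrow> h - 1 \<le> sym_dist n (r k) (r ((k+1) mod n))"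
  using assms unfolding Rset_def by auto

lemma Min_g: assumes "r \<in> Rset n h" shows "Min ((\<lambda>k. sym_dist n (r k) (r ((k+1) mod n))) ` {..<n}) = h - 1"
proof (rule Min_eqI)
  show "finite ((\<lambda>k. sym_dist n (r k) (r ((k+1) mod n))) ` {..<n})" by simp
  show "\<And>y. y \<in> (\<lambda>k. sym_dist n (r k) (r ((k+1) mod n))) ` {..<n} \<Longrightarrow> h - 1 \<le> y"
    using Rfacts(4)[OF assms] by auto
  show "h - 1 \<in> (\<lambda>k. sym_dist n (r k) (r ((k+1) mod n))) ` {..<n}"
    using R_min[OF nh h3 assms] by (metis (no_types, lifting) image_eqI lessThan_iff)
qed

lemma row_bij: assumes "r \<in> Rset n h" "\<And>j. j < n \<Longrightarrow> f j < n" "\<And>x y. x < n \<Longrightarrow> y < n \<Longrightarrow> f x = f y \<Longrightarrow> x = y"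
  "\<And>j. j < n \<Longrightarrow> F j = r (f j)"
  shows "bij_betw F {0..<n} {1..n}"
proof -
  have "bij_betw f {0..<n} {0..<n}" using bij_mod assms(2,3) by blast
  then have "bij_betw (r \<circ> f) {0..<n} {1..n}" using Rfacts(1)[OF assms(1)] by (rule bij_betw_trans)
  moreover have "\<And>j. j \<in> {0..<n} \<Longrightarrow> F j = (r \<circ> f) j" using assms(4) by simp
  ultimately show ?thesis using bij_betw_cong by blast
qed

lemma shift_inj: "x < n \<Longrightarrow> y < n \<Longrightarrow> (x + c) mod n = (y + c) mod n \<Longrightarrow> x = y"
  using nat_mod_cancel[of x c n y] by simp

lemma neg_inj: assumes "a < n" "b < n" "(j + n - a) mod n = (j + n - b) mod n" shows "a = b"
proof -
  have "((j + n - a) + (a + b)) mod n = ((j + n - a) mod n + (a + b)) mod n" by (simp add: mod_add_left_eq)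
  also have "\<dots> = ((j + n - b) mod n + (a + b)) mod n" using assms(3) by simp
  also have "\<dots> = ((j + n - b) + (a + b)) mod n" by (simp add: mod_add_left_eq)
  finally have e: "((j + n - a) + (a + b)) mod n = ((j + n - b) + (a + b)) mod n" .
  have "(j + n - a) + (a + b) = b + (j + n)" "(j + n - b) + (a + b) = a + (j + n)" using assms by auto
  then have "(b + (j + n)) mod n = (a + (j + n)) mod n" using e by (simp add: ac_simps)
  then have "b mod n = a mod n" by (rule nat_mod_cancel)
  then show ?thesis using assms by simp
qed

lemma circ_in: assumes R: "r \<in> Rset n h"
  shows "latin_square n (circ n r) \<and> circulant n (circ n r) \<and> inner_distance n (circ n r) = h - 1 \<and> circ n r 0 0 = 1"
proof -
  have m: "is_matrix n (circ n r)" unfolding is_matrix_def circ_def by auto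
  have rows: "bij_betw (\<lambda>j. circ n r i j) {0..<n} {1..n}" if "i < n" for i
  proof (rule row_bij[OF R, of "\<lambda>j. (j + (n - i)) mod n"])
    show "\<And>j. j < n \<Longrightarrow> (j + (n - i)) mod n < n" using n2' by simp
    show "\<And>x y. x < n \<Longrightarrow> y < n \<Longrightarrow> (x + (n - i)) mod n = (y + (n - i)) mod n \<Longrightarrow> x = y"
      by (rule shift_inj)
    show "\<And>j. j < n \<Longrightarrow> circ n r i j = r ((j + (n - i)) mod n)" unfolding circ_def using that by simp
  qed
  have cols: "bij_betw (\<lambda>i. circ n r i j) {0..<n} {1..n}" if "j < n" for j
  proof (rule row_bij[OF R, of "\<lambda>i. (j + n - i) mod n"])
    show "\<And>i. i < n \<Longrightarrow> (j + n - i) mod n < n" using n2' by simp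
    show "\<And>x y. x < n \<Longrightarrow> y < n \<Longrightarrow> (j + n - x) mod n = (j + n - y) mod n \<Longrightarrow> x = y"
      by (rule neg_inj)
    show "\<And>i. i < n \<Longrightarrow> circ n r i j = r ((j + n - i) mod n)" unfolding circ_def using that by simp
  qed
  have c: "circulant n (circ n r)" unfolding circulant_def
  proof (intro allI impI)
    fix i j assume ij: "i + 1 < n \<and> j < n"
    show "circ n r (i+1) ((j+1) mod n) = circ n r i j"
    proof (cases "j + 1 < n")
      case True
      then show ?thesis using ij unfolding circ_def by simp
    next
      case False
      then have j: "j + 1 = n" using ij by simp
      have "(j + n - i) mod n = ((n - (i+1)) + n) mod n" using j ij by (metis add_Suc_right Suc_diff_Suc add.commute add_diff_assoc2 diff_add_inverse nat_less_le plus_1_eq_Suc less_imp_le_nat Suc_eq_plus1 add_Suc diff_Suc_Suc)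
      also have "\<dots> = (n - (i+1)) mod n" by (rule mod_add_self2)
      finally show ?thesis using j ij unfolding circ_def by simp
    qed
  qed
  have "inner_distance n (circ n r) = h - 1" using ID_circ[OF n2'(1)] Min_g[OF R] by simp
  moreover have "circ n r 0 0 = 1" using Rfacts(2)[OF R] n2' unfolding circ_def by simp
  moreover have "latin_square n (circ n r)" unfolding latin_square_def using m rows cols by blast
  ultimately show ?thesis using c by blast
qed

lemma bcirc_in: assumes R: "r \<in> Rset n h"
  shows "latin_square n (bcirc n r) \<and> back_circulant n (bcirc n r) \<and> inner_distance n (bcirc n r) = h - 1 \<and> bcirc n r 0 0 = 1"
proof -
  have m: "is_matrix n (bcirc n r)" unfolding is_matrix_def bcirc_def by auto
  have rows: "bij_betw (\<lambda>j. bcirc n r i j) {0..<n} {1..n}" if "i < n" for i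
  proof (rule row_bij[OF R, of "\<lambda>j. (j + i) mod n"])
    show "\<And>j. j < n \<Longrightarrow> (j + i) mod n < n" using n2' by simp
    show "\<And>x y. x < n \<Longrightarrow> y < n \<Longrightarrow> (x + i) mod n = (y + i) mod n \<Longrightarrow> x = y"
      by (rule shift_inj)
    show "\<And>j. j < n \<Longrightarrow> bcirc n r i j = r ((j + i) mod n)" unfolding bcirc_def using that by (simp add: add.commute)
  qed
  have cols: "bij_betw (\<lambda>i. bcirc n r i j) {0..<n} {1..n}" if "j < n" for j
  proof (rule row_bij[OF R, of "\<lambda>i. (i + j) mod n"])
    show "\<And>i. i < n \<Longrightarrow> (i + j) mod n < n" using n2' by simp
    show "\<And>x y. x < n \<Longrightarrow> y < n \<Longrightarrow> (x + j) mod n = (y + j) mod n \<Longrightarrow> x = y"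
      by (rule shift_inj)
    show "\<And>i. i < n \<Longrightarrow> bcirc n r i j = r ((i + j) mod n)" unfolding bcirc_def using that by simp
  qed
  have c: "back_circulant n (bcirc n r)" unfolding back_circulant_def
  proof (intro allI impI)
    fix i j assume ij: "i + 1 < n \<and> j < n"
    have "(i + (j + 1) mod n) mod n = (i + 1 + j) mod n" by (simp add: mod_add_right_eq)
    then show "bcirc n r (i+1) j = bcirc n r i ((j+1) mod n)" using ij n2' unfolding bcirc_def by simp
  qed
  have "inner_distance n (bcirc n r) = h - 1" using ID_bcirc[OF n2'(1)] Min_g[OF R] by simp
  moreover have "bcirc n r 0 0 = 1" using Rfacts(2)[OF R] n2' unfolding bcirc_def by simp
  moreover have "latin_square n (bcirc n r)" unfolding latin_square_def using m rows cols by blast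
  ultimately show ?thesis using c by blast
qed

lemma circ_inj: "inj_on (circ n) (Rset n h)"
proof (rule inj_onI)
  fix r r' assume R: "r \<in> Rset n h" "r' \<in> Rset n h" and eq: "circ n r = circ n r'"
  show "r = r'"
  proof
    fix j
    show "r j = r' j"
    proof (cases "j < n")
      case True
      have "circ n r 0 j = circ n r' 0 j" using eq by simp
      then show ?thesis using True unfolding circ_def by simp
    next
      case False
      then show ?thesis using Rfacts(3)[OF R(1)] Rfacts(3)[OF R(2)] by simp
    qed
  qed
qed

lemma bcirc_inj: "inj_on (bcirc n) (Rset n h)"
proof (rule inj_onI)
  fix r r' assume R: "r \<in> Rset n h" "r' \<in> Rset n h" and eq: "bcirc n r = bcirc n r'"
  show "r = r'"
  proof
    fix j
    show "r j = r' j"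
    proof (cases "j < n")
      case True
      have "bcirc n r 0 j = bcirc n r' 0 j" using eq by simp
      then show ?thesis using True n2' unfolding bcirc_def by simp
    next
      case False
      then show ?thesis using Rfacts(3)[OF R(1)] Rfacts(3)[OF R(2)] by simp
    qed
  qed
qed

lemma hdiv: "n div 2 - 1 = h - 1" using nh by simp

lemma L_to_R: assumes ls: "latin_square n L" and id: "inner_distance n L = h - 1" and L00: "L 0 0 = 1"
  and form: "inner_distance n L = Min ((\<lambda>k. sym_dist n (L 0 k) (L 0 ((k+1) mod n))) ` {..<n})"
  shows "L 0 \<in> Rset n h"
proof -
  have m: "is_matrix n L" and rows: "\<forall>i<n. bij_betw (\<lambda>j. L i j) {0..<n} {1..n}" using ls unfolding latin_square_def by auto
  have b: "bij_betw (L 0) {0..<n} {1..n}" using rows n2' by auto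
  have z: "\<forall>j. n \<le> j \<longrightarrow> L 0 j = 0" using m unfolding is_matrix_def by auto
  have sd: "h - 1 \<le> sym_dist n (L 0 k) (L 0 ((k+1) mod n))" if "k < n" for k
  proof -
    have "Min ((\<lambda>k. sym_dist n (L 0 k) (L 0 ((k+1) mod n))) ` {..<n}) \<le> sym_dist n (L 0 k) (L 0 ((k+1) mod n))"
      using that by (intro Min_le) auto
    then show ?thesis using id form by simp
  qed
  show ?thesis unfolding Rset_def using b z L00 sd by blast
qed

lemma SC_eq: "{L. latin_square n L \<and> circulant n L \<and> inner_distance n L = n div 2 - 1 \<and> L 0 0 = 1} = circ n ` Rset n h"
proof
  show "{L. latin_square n L \<and> circulant n L \<and> inner_distance n L = n div 2 - 1 \<and> L 0 0 = 1} \<subseteq> circ n ` Rset n h"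
  proof
    fix L assume "L \<in> {L. latin_square n L \<and> circulant n L \<and> inner_distance n L = n div 2 - 1 \<and> L 0 0 = 1}"
    then have ls: "latin_square n L" and c: "circulant n L" and id: "inner_distance n L = h - 1" and L00: "L 0 0 = 1"
      using hdiv by auto
    have m: "is_matrix n L" using ls unfolding latin_square_def by auto
    have eqL: "L = circ n (L 0)"
    proof (intro ext)
      fix i j show "L i j = circ n (L 0) i j"
      proof (cases "i < n \<and> j < n")
        case True then show ?thesis using circ_form[OF c, of i j] unfolding circ_def by simp
      next
        case False then show ?thesis using m unfolding is_matrix_def circ_def by auto
      qed
    qed
    have "inner_distance n L = Min ((\<lambda>k. sym_dist n (L 0 k) (L 0 ((k+1) mod n))) ` {..<n})"
      using ID_circ[OF n2'(1), of "L 0"] eqL by simp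
    then have "L 0 \<in> Rset n h" using L_to_R[OF ls id L00] by simp
    then show "L \<in> circ n ` Rset n h" using eqL by blast
  qed
  show "circ n ` Rset n h \<subseteq> {L. latin_square n L \<and> circulant n L \<and> inner_distance n L = n div 2 - 1 \<and> L 0 0 = 1}"
  proof
    fix L assume "L \<in> circ n ` Rset n h"
    then obtain r where r: "r \<in> Rset n h" "L = circ n r" by blast
    show "L \<in> {L. latin_square n L \<and> circulant n L \<and> inner_distance n L = n div 2 - 1 \<and> L 0 0 = 1}"
      using circ_in[OF r(1)] r(2) hdiv by simp
  qed
qed

lemma BSC_eq: "{L. latin_square n L \<and> back_circulant n L \<and> inner_distance n L = n div 2 - 1 \<and> L 0 0 = 1} = bcirc n ` Rset n h"
proof
  show "{L. latin_square n L \<and> back_circulant n L \<and> inner_distance n L = n div 2 - 1 \<and> L 0 0 = 1} \<subseteq> bcirc n ` Rset n h"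
  proof
    fix L assume "L \<in> {L. latin_square n L \<and> back_circulant n L \<and> inner_distance n L = n div 2 - 1 \<and> L 0 0 = 1}"
    then have ls: "latin_square n L" and c: "back_circulant n L" and id: "inner_distance n L = h - 1" and L00: "L 0 0 = 1"
      using hdiv by auto
    have m: "is_matrix n L" using ls unfolding latin_square_def by auto
    have eqL: "L = bcirc n (L 0)"
    proof (intro ext)
      fix i j show "L i j = bcirc n (L 0) i j"
      proof (cases "i < n \<and> j < n")
        case True then show ?thesis using bcirc_form[OF c, of i j] unfolding bcirc_def by simp
      next
        case False then show ?thesis using m unfolding is_matrix_def bcirc_def by auto
      qed
    qed
    have "inner_distance n L = Min ((\<lambda>k. sym_dist n (L 0 k) (L 0 ((k+1) mod n))) ` {..<n})"
      using ID_bcirc[OF n2'(1), of "L 0"] eqL by simp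
    then have "L 0 \<in> Rset n h" using L_to_R[OF ls id L00] by simp
    then show "L \<in> bcirc n ` Rset n h" using eqL by blast
  qed
  show "bcirc n ` Rset n h \<subseteq> {L. latin_square n L \<and> back_circulant n L \<and> inner_distance n L = n div 2 - 1 \<and> L 0 0 = 1}"
  proof
    fix L assume "L \<in> bcirc n ` Rset n h"
    then obtain r where r: "r \<in> Rset n h" "L = bcirc n r" by blast
    show "L \<in> {L. latin_square n L \<and> back_circulant n L \<and> inner_distance n L = n div 2 - 1 \<and> L 0 0 = 1}"
      using bcirc_in[OF r(1)] r(2) hdiv by simp
  qed
qed

lemma card_SC: "card {L. latin_square n L \<and> circulant n L \<and> inner_distance n L = n div 2 - 1 \<and> L 0 0 = 1} = (if even h then n + 2 else n)"
  unfolding SC_eq using card_image[OF circ_inj] card_R[OF nh h3] by simp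

lemma card_BSC: "card {L. latin_square n L \<and> back_circulant n L \<and> inner_distance n L = n div 2 - 1 \<and> L 0 0 = 1} = (if even h then n + 2 else n)"
  unfolding BSC_eq using card_image[OF bcirc_inj] card_R[OF nh h3] by simp

end

theorem mainTheorem12:
  fixes n :: nat
  assumes "n \<ge> 6" and "even n"
  shows "(n mod 4 = 0 \<longrightarrow>
            card {L. latin_square n L \<and> circulant n L \<and> inner_distance n L = n div 2 - 1 \<and> L 0 0 = 1} = n + 2 \<and>
            card {L. latin_square n L \<and> back_circulant n L \<and> inner_distance n L = n div 2 - 1 \<and> L 0 0 = 1} = n + 2)
       \<and> (n mod 4 = 2 \<longrightarrow>
            card {L. latin_square n L \<and> circulant n L \<and> inner_distance n L = n div 2 - 1 \<and> L 0 0 = 1} = n \<and>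
            card {L. latin_square n L \<and> back_circulant n L \<and> inner_distance n L = n div 2 - 1 \<and> L 0 0 = 1} = n)"
proof -
  define h where "h = n div 2"
  have nh: "n = 2*h" using assms(2) unfolding h_def by simp
  have h3: "h \<ge> 3" using assms(1) unfolding h_def by simp
  have ev: "even h \<longleftrightarrow> n mod 4 = 0" using nh by presburger
  have od: "odd h \<longleftrightarrow> n mod 4 = 2" using nh by presburger
  have c1: "card {L. latin_square n L \<and> circulant n L \<and> inner_distance n L = n div 2 - 1 \<and> L 0 0 = 1} = (if even h then n + 2 else n)"
    by (rule card_SC[OF nh h3])
  have c2: "card {L. latin_square n L \<and> back_circulant n L \<and> inner_distance n L = n div 2 - 1 \<and> L 0 0 = 1} = (if even h then n + 2 else n)"
    by (rule card_BSC[OF nh h3])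
  show ?thesis
  proof (intro conjI impI)
    assume "n mod 4 = 0"
    then have "even h" using ev by simp
    then show "card {L. latin_square n L \<and> circulant n L \<and> inner_distance n L = n div 2 - 1 \<and> L 0 0 = 1} = n + 2"
      "card {L. latin_square n L \<and> back_circulant n L \<and> inner_distance n L = n div 2 - 1 \<and> L 0 0 = 1} = n + 2"
      using c1 c2 by simp_all
  next
    assume "n mod 4 = 2"
    then have "odd h" using od by simp
    then show "card {L. latin_square n L \<and> circulant n L \<and> inner_distance n L = n div 2 - 1 \<and> L 0 0 = 1} = n"
      "card {L. latin_square n L \<and> back_circulant n L \<and> inner_distance n L = n div 2 - 1 \<and> L 0 0 = 1} = n"
      using c1 c2 by simp_all
  qed
qed

end
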